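(* Let $G$ be a graph of order $n$ and maximum degree $\Delta$. Then $\phi_k^d(G)=n$ in each of the following cases: (i) $G$ is a tree with $\Delta\ge 2$ and $k\in\{2,\dots,\Delta\}$; (ii) $G$ is a planar graph with $\Delta\ge 6$ and $k\in\{6,\dots,\Delta\}$; (iii) $G$ is a planar triangle-free graph with $\Delta\ge 4$ and $k\in\{4,\dots,\Delta\}$.
   Context: All graphs are finite and simple. For a graph $G=(V,E)$, a set $S\subseteq V$ and $v\in V$, let $\delta_S(v)=|\{u\in S: uv\in E\}|$ and $\overline{S}=V\setminus S$. For an integer $k$, a non-empty set $S\subseteq V$ is a defensive $k$-alliance if $\delta_S(v)\ge \delta_{\overline S}(v)+k$ for every $v\in S$. A set $X\subseteq V$ is a defensive $k$-alliance free set ($k$-daf set) if no defensive $k$-alliance $S$ satisfies $S\subseteq X$. $\phi_k^d(G)$ denotes the maximum cardinality of a $k$-daf set in $G$. *)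

theory Defs
  imports "HOL-Analysis.Analysis"
begin

definition graph :: "'a set \<Rightarrow> 'a set set \<Rightarrow> bool" where
  "graph V E \<longleftrightarrow> finite V \<and> (\<forall>e\<in>E. \<exists>u v. e = {u, v} \<and> u \<noteq> v \<and> u \<in> V \<and> v \<in> V)"

definition adj :: "'a set set \<Rightarrow> 'a \<Rightarrow> 'a \<Rightarrow> bool" where
  "adj E u v \<longleftrightarrow> {u, v} \<in> E"

definition delta :: "'a set set \<Rightarrow> 'a set \<Rightarrow> 'a \<Rightarrow> nat" where
  "delta E S v = card {u \<in> S. adj E u v}"

definition degree :: "'a set \<Rightarrow> 'a set set \<Rightarrow> 'a \<Rightarrow> nat" where
  "degree V E v = delta E V v"

definition max_degree :: "'a set \<Rightarrow> 'a set set \<Rightarrow> nat" where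
  "max_degree V E = Max (insert 0 (degree V E ` V))"

definition defensive_alliance :: "'a set \<Rightarrow> 'a set set \<Rightarrow> int \<Rightarrow> 'a set \<Rightarrow> bool" where
  "defensive_alliance V E k S \<longleftrightarrow> S \<noteq> {} \<and> S \<subseteq> V \<and>
     (\<forall>v\<in>S. int (delta E S v) \<ge> int (delta E (V - S) v) + k)"

definition daf_set :: "'a set \<Rightarrow> 'a set set \<Rightarrow> int \<Rightarrow> 'a set \<Rightarrow> bool" where
  "daf_set V E k X \<longleftrightarrow> X \<subseteq> V \<and> \<not> (\<exists>S. S \<subseteq> X \<and> defensive_alliance V E k S)"

definition phi_d :: "'a set \<Rightarrow> 'a set set \<Rightarrow> int \<Rightarrow> nat" where
  "phi_d V E k = Max {card X | X. daf_set V E k X}"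

definition walk :: "'a set \<Rightarrow> 'a set set \<Rightarrow> 'a list \<Rightarrow> bool" where
  "walk V E xs \<longleftrightarrow> xs \<noteq> [] \<and> set xs \<subseteq> V \<and> (\<forall>i. Suc i < length xs \<longrightarrow> adj E (xs ! i) (xs ! Suc i))"

definition connected_graph :: "'a set \<Rightarrow> 'a set set \<Rightarrow> bool" where
  "connected_graph V E \<longleftrightarrow> (\<forall>u\<in>V. \<forall>v\<in>V. \<exists>xs. walk V E xs \<and> hd xs = u \<and> last xs = v)"

definition has_cycle :: "'a set \<Rightarrow> 'a set set \<Rightarrow> bool" where
  "has_cycle V E \<longleftrightarrow> (\<exists>xs. walk V E xs \<and> distinct xs \<and> length xs \<ge> 3 \<and> adj E (last xs) (hd xs))"

definition is_tree :: "'a set \<Rightarrow> 'a set set \<Rightarrow> bool" where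
  "is_tree V E \<longleftrightarrow> V \<noteq> {} \<and> connected_graph V E \<and> \<not> has_cycle V E"

definition triangle_free :: "'a set \<Rightarrow> 'a set set \<Rightarrow> bool" where
  "triangle_free V E \<longleftrightarrow> \<not> (\<exists>u\<in>V. \<exists>v\<in>V. \<exists>w\<in>V. adj E u v \<and> adj E v w \<and> adj E u w)"

text \<open>Planarity: a drawing in the plane (complex numbers = R^2): vertices are distinct points,
  each edge is an arc between the images of its endpoints meeting no other vertex point,
  and two distinct edges meet only in common endpoints.\<close>
definition planar :: "'a set \<Rightarrow> 'a set set \<Rightarrow> bool" where
  "planar V E \<longleftrightarrow> (\<exists>(p :: 'a \<Rightarrow> complex) (\<gamma> :: 'a set \<Rightarrow> real \<Rightarrow> complex).
     inj_on p V \<and>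
     (\<forall>e\<in>E. arc (\<gamma> e) \<and> {pathstart (\<gamma> e), pathfinish (\<gamma> e)} = p ` e \<and>
              path_image (\<gamma> e) \<inter> p ` V = p ` e) \<and>
     (\<forall>e\<in>E. \<forall>e'\<in>E. e \<noteq> e' \<longrightarrow> path_image (\<gamma> e) \<inter> path_image (\<gamma> e') \<subseteq> p ` (e \<inter> e')))"

end

theory Submission
  imports Defs "HOL-Library.Transitive_Closure_Table"
begin

fun pe :: "'a list \<Rightarrow> 'a set set" where
  "pe (a # b # xs) = insert {a, b} (pe (b # xs))"
| "pe _ = {}"

definition cedges :: "'a list \<Rightarrow> 'a set set" where
  "cedges cs = insert {last cs, hd cs} (pe cs)"

definition cyc :: "'a set set \<Rightarrow> 'a list \<Rightarrow> bool" where
  "cyc E cs \<longleftrightarrow> distinct cs \<and> 3 \<le> length cs \<and> cedges cs \<subseteq> E"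

lemma pe_Union_sub: "\<Union> (pe xs) \<subseteq> set xs"
  by (induction xs rule: pe.induct) auto

lemma pe_Union: "2 \<le> length xs \<Longrightarrow> \<Union> (pe xs) = set xs"
proof (induction xs rule: pe.induct)
  case (1 a b xs)
  then show ?case by (cases xs) auto
qed auto

lemma pe_append: "xs \<noteq> [] \<Longrightarrow> pe (xs @ ys) = pe xs \<union> pe (last xs # ys)"
proof (induction xs rule: pe.induct)
  case (1 a b xs)
  then show ?case by auto
next
  case ("2_1")
  then show ?case by simp
next
  case ("2_2" v)
  then show ?case by (cases ys) auto
qed

lemma pe_Cons_Cons: "pe (a # b # xs) = insert {a,b} (pe (b # xs))" by simp

lemma pe_snoc: "xs \<noteq> [] \<Longrightarrow> pe (xs @ [y]) = insert {last xs, y} (pe xs)"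
  by (simp add: pe_append)

lemma pe_rev: "pe (rev xs) = pe xs"
proof (induction xs rule: pe.induct)
  case (1 a b xs)
  have "pe (rev (a # b # xs)) = pe ((rev xs @ [b]) @ [a])" by simp
  also have "\<dots> = insert {b, a} (pe (rev xs @ [b]))" by (subst pe_snoc) auto
  also have "\<dots> = insert {a, b} (pe (rev (b # xs)))" by (simp add: insert_commute)
  finally show ?case using 1 by simp
qed auto

lemma pe_finite: "finite (pe xs)"
  by (induction xs rule: pe.induct) auto

lemma pe_card: "distinct xs \<Longrightarrow> card (pe xs) = length xs - 1"
proof (induction xs rule: pe.induct)
  case (1 a b xs)
  have "{a,b} \<notin> pe (b # xs)" using pe_Union_sub[of "b # xs"] 1(2) by auto
  moreover have "finite (pe (b # xs))" by (rule pe_finite)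
  ultimately show ?case using 1 by simp
qed auto

lemma pe_card_le: "card (pe xs) \<le> length xs - 1"
  by (induction xs rule: pe.induct) (auto simp: card_insert_if pe_finite)

lemma pe_nth: "Suc i < length xs \<Longrightarrow> {xs ! i, xs ! Suc i} \<in> pe xs"
proof (induction xs arbitrary: i rule: pe.induct)
  case (1 a b xs)
  then show ?case by (cases i) auto
qed auto

lemma pe_take_drop: "j < length xs \<Longrightarrow> pe xs = pe (take (Suc j) xs) \<union> pe (drop j xs)"
proof -
  assume j: "j < length xs"
  have ne: "take (Suc j) xs \<noteq> []" using j by (cases xs) auto
  have "pe xs = pe (take (Suc j) xs @ drop (Suc j) xs)" by simp
  also have "\<dots> = pe (take (Suc j) xs) \<union> pe (last (take (Suc j) xs) # drop (Suc j) xs)"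
    by (rule pe_append[OF ne])
  also have "last (take (Suc j) xs) = xs ! j"
    using j apply (subst last_conv_nth[OF ne])
    apply (auto simp: min_def)
    apply (subgoal_tac "length xs - Suc 0 = j")
     apply simp
    apply arith
    done
  also have "xs ! j # drop (Suc j) xs = drop j xs"
    using j by (rule Cons_nth_drop_Suc)
  finally show ?thesis .
qed


lemma pe_mono_prefix: "pe xs \<subseteq> pe (xs @ ys)"
  by (cases "xs = []") (auto simp: pe_append)

lemma cedges_rotate1: "3 \<le> length cs \<Longrightarrow> cedges (rotate1 cs) = cedges cs"
proof -
  assume "3 \<le> length cs"
  obtain a xs where cs: "cs = a # xs" using \<open>3 \<le> length cs\<close> by (cases cs) auto
  have xs: "xs \<noteq> []" using \<open>3 \<le> length cs\<close> cs by auto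
  have "cedges (rotate1 cs) = insert {a, hd xs} (insert {last xs, a} (pe xs))"
    using xs by (simp add: cs cedges_def pe_snoc insert_commute)
  moreover have "pe cs = insert {a, hd xs} (pe xs)" using xs by (cases xs) (auto simp: cs)
  ultimately show ?thesis using xs by (simp add: cedges_def cs insert_commute)
qed

lemma cyc_rotate1: "cyc E cs \<Longrightarrow> cyc E (rotate1 cs)"
  by (simp add: cyc_def cedges_rotate1)

lemma cyc_rotate: "cyc E cs \<Longrightarrow> cyc E (rotate n cs) \<and> cedges (rotate n cs) = cedges cs"
proof (induction n)
  case 0 then show ?case by simp
next
  case (Suc n)
  have r: "rotate (Suc n) cs = rotate1 (rotate n cs)" by (rule rotate_Suc)
  have c: "cyc E (rotate n cs)" and ce: "cedges (rotate n cs) = cedges cs" using Suc by blast+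
  have l: "3 \<le> length (rotate n cs)" using c by (simp only: cyc_def)
  have "cyc E (rotate1 (rotate n cs))" by (rule cyc_rotate1[OF c])
  moreover have "cedges (rotate1 (rotate n cs)) = cedges cs" using cedges_rotate1[OF l] ce by (rule trans)
  ultimately show ?case unfolding r by blast
qed

lemma cyc_rotate_hd:
  assumes "cyc E cs" "u \<in> set cs"
  shows "\<exists>cs'. cyc E cs' \<and> cedges cs' = cedges cs \<and> set cs' = set cs \<and> length cs' = length cs \<and> hd cs' = u"
proof -
  obtain i where i: "i < length cs" "cs ! i = u" using assms(2) by (auto simp: in_set_conv_nth)
  let ?cs = "rotate i cs"
  have "hd ?cs = cs ! (i mod length cs)" using i by (intro hd_rotate_conv_nth) auto
  then have "hd ?cs = u" using i by simp
  then show ?thesis using cyc_rotate[OF assms(1), of i] by (rule_tac x="?cs" in exI) simp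
qed

lemma closing_notin:
  assumes "distinct cs" "3 \<le> length cs"
  shows "{last cs, hd cs} \<notin> pe cs"
proof -
  obtain a b rest where cs: "cs = a # b # rest"
    using assms(2) by (cases cs; cases "tl cs") auto
  have rest: "rest \<noteq> []" using assms(2) cs by auto
  show ?thesis
  proof
    assume "{last cs, hd cs} \<in> pe cs"
    then have h: "{last rest, a} \<in> insert {a,b} (pe (b # rest))" using rest by (simp add: cs)
    have "last rest \<in> set rest" using rest by simp
    then have "last rest \<noteq> b" "last rest \<noteq> a" using assms(1) by (auto simp: cs)
    moreover have "a \<notin> \<Union>(pe (b # rest))" using pe_Union_sub[of "b # rest"] assms(1) cs by auto
    ultimately show False using h by (auto simp: doubleton_eq_iff)
  qed
qed

lemma cedges_card:
  assumes "distinct cs" "3 \<le> length cs"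
  shows "card (cedges cs) = length cs"
  using closing_notin[OF assms] pe_card[OF assms(1)] assms(2) by (simp add: cedges_def pe_finite)

lemma cedges_card_le: "cs \<noteq> [] \<Longrightarrow> card (cedges cs) \<le> length cs"
proof -
  assume "cs \<noteq> []"
  have "card (cedges cs) \<le> Suc (card (pe cs))"
    unfolding cedges_def by (simp add: card_insert_if pe_finite)
  then show ?thesis using pe_card_le[of cs] \<open>cs \<noteq> []\<close> by (cases cs) auto
qed

lemma cedges_Union: "3 \<le> length cs \<Longrightarrow> \<Union> (cedges cs) = set cs"
  using pe_Union[of cs] by (cases cs) (auto simp: cedges_def)


definition drawn :: "'a set \<Rightarrow> 'a set set \<Rightarrow> ('a \<Rightarrow> complex) \<Rightarrow> ('a set \<Rightarrow> real \<Rightarrow> complex) \<Rightarrow> bool" where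
  "drawn V E p \<gamma> \<longleftrightarrow> inj_on p V \<and>
     (\<forall>e\<in>E. arc (\<gamma> e) \<and> {pathstart (\<gamma> e), pathfinish (\<gamma> e)} = p ` e \<and>
              path_image (\<gamma> e) \<inter> p ` V = p ` e) \<and>
     (\<forall>e\<in>E. \<forall>e'\<in>E. e \<noteq> e' \<longrightarrow> path_image (\<gamma> e) \<inter> path_image (\<gamma> e') \<subseteq> p ` (e \<inter> e'))"

lemma planar_drawn: "planar V E \<longleftrightarrow> (\<exists>p \<gamma>. drawn V E p \<gamma>)"
  unfolding planar_def drawn_def by (rule refl)

definition img :: "('a set \<Rightarrow> real \<Rightarrow> complex) \<Rightarrow> 'a set set \<Rightarrow> complex set" where
  "img \<gamma> F = (\<Union>e\<in>F. path_image (\<gamma> e))"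

definition eint :: "('a set \<Rightarrow> real \<Rightarrow> complex) \<Rightarrow> ('a \<Rightarrow> complex) \<Rightarrow> 'a set \<Rightarrow> complex set" where
  "eint \<gamma> p e = path_image (\<gamma> e) - p ` e"

lemma graph_edge:
  assumes "graph V E" "e \<in> E" shows "\<exists>u v. e = {u,v} \<and> u \<noteq> v \<and> u \<in> V \<and> v \<in> V"
  using assms(1)[unfolded graph_def, THEN conjunct2] assms(2) by (rule bspec)

lemma graph_edge_sub: "graph V E \<Longrightarrow> e \<in> E \<Longrightarrow> e \<subseteq> V"
  using graph_edge by fastforce

lemma graph_fin: "graph V E \<Longrightarrow> finite V"
  unfolding graph_def by (rule conjunct1)

lemma graph_sub:
  assumes "graph V E" "V' \<subseteq> V" "E' \<subseteq> E" "\<forall>e\<in>E'. e \<subseteq> V'"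
  shows "graph V' E'"
proof -
  have "finite V'" using graph_fin[OF assms(1)] assms(2) finite_subset by blast
  moreover have "\<exists>u v. e = {u, v} \<and> u \<noteq> v \<and> u \<in> V' \<and> v \<in> V'" if e: "e \<in> E'" for e
  proof -
    obtain u v where "e = {u,v}" "u \<noteq> v" using graph_edge[OF assms(1)] assms(3) e by blast
    moreover have "e \<subseteq> V'" using assms(4) e by blast
    ultimately show ?thesis by blast
  qed
  ultimately show ?thesis unfolding graph_def by blast
qed

lemma drawn_inj: "drawn V E p \<gamma> \<Longrightarrow> inj_on p V"
  unfolding drawn_def by (rule conjunct1)

lemma drawn_edges: "drawn V E p \<gamma> \<Longrightarrow> \<forall>e\<in>E. arc (\<gamma> e) \<and> {pathstart (\<gamma> e), pathfinish (\<gamma> e)} = p ` e \<and>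
              path_image (\<gamma> e) \<inter> p ` V = p ` e"
  unfolding drawn_def by (rule conjunct1[OF conjunct2])

lemma drawn_cross: "drawn V E p \<gamma> \<Longrightarrow> \<forall>e\<in>E. \<forall>e'\<in>E. e \<noteq> e' \<longrightarrow> path_image (\<gamma> e) \<inter> path_image (\<gamma> e') \<subseteq> p ` (e \<inter> e')"
  unfolding drawn_def by (rule conjunct2[OF conjunct2])

lemma drawnI:
  assumes "inj_on p V"
    "\<And>e. e \<in> E \<Longrightarrow> arc (\<gamma> e) \<and> {pathstart (\<gamma> e), pathfinish (\<gamma> e)} = p ` e \<and> path_image (\<gamma> e) \<inter> p ` V = p ` e"
    "\<And>e e'. e \<in> E \<Longrightarrow> e' \<in> E \<Longrightarrow> e \<noteq> e' \<Longrightarrow> path_image (\<gamma> e) \<inter> path_image (\<gamma> e') \<subseteq> p ` (e \<inter> e')"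
  shows "drawn V E p \<gamma>"
  unfolding drawn_def using assms by (intro conjI ballI impI) auto

lemma drawn_sub:
  assumes "drawn V E p \<gamma>" "V' \<subseteq> V" "E' \<subseteq> E" "\<forall>e\<in>E'. e \<subseteq> V'"
  shows "drawn V' E' p \<gamma>"
proof (rule drawnI)
  show "inj_on p V'" using drawn_inj[OF assms(1)] assms(2) by (rule inj_on_subset)
next
  fix e assume eE': "e \<in> E'"
  have e: "e \<in> E" using eE' assms(3) by blast
  have h: "arc (\<gamma> e) \<and> {pathstart (\<gamma> e), pathfinish (\<gamma> e)} = p ` e \<and> path_image (\<gamma> e) \<inter> p ` V = p ` e"
    using drawn_edges[OF assms(1)] e by (rule bspec)
  have "p ` e \<subseteq> path_image (\<gamma> e)"
  proof -
    have "{pathstart (\<gamma> e), pathfinish (\<gamma> e)} \<subseteq> path_image (\<gamma> e)"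
      by (simp add: pathstart_in_path_image pathfinish_in_path_image)
    then show ?thesis using h by simp
  qed
  moreover have "p ` e \<subseteq> p ` V'" using assms(4) eE' by blast
  moreover have "path_image (\<gamma> e) \<inter> p ` V' \<subseteq> p ` e" using h assms(2) by blast
  ultimately show "arc (\<gamma> e) \<and> {pathstart (\<gamma> e), pathfinish (\<gamma> e)} = p ` e \<and> path_image (\<gamma> e) \<inter> p ` V' = p ` e"
    using h by blast
next
  fix e e' assume "e \<in> E'" "e' \<in> E'" "e \<noteq> e'"
  then show "path_image (\<gamma> e) \<inter> path_image (\<gamma> e') \<subseteq> p ` (e \<inter> e')"
    using drawn_cross[OF assms(1)] assms(3) by blast
qed

context
  fixes V E p \<gamma>
  assumes G: "graph V E" and D: "drawn V E p \<gamma>"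
begin

lemma inj: "inj_on p V" using D by (rule drawn_inj)

lemma edge_all: "e \<in> E \<Longrightarrow> arc (\<gamma> e) \<and> {pathstart (\<gamma> e), pathfinish (\<gamma> e)} = p ` e \<and> path_image (\<gamma> e) \<inter> p ` V = p ` e"
  using drawn_edges[OF D] by (rule bspec)

lemma arc_e: "e \<in> E \<Longrightarrow> arc (\<gamma> e)" using edge_all by blast

lemma ends_e: "e \<in> E \<Longrightarrow> {pathstart (\<gamma> e), pathfinish (\<gamma> e)} = p ` e" using edge_all by blast

lemma vert_e: "e \<in> E \<Longrightarrow> path_image (\<gamma> e) \<inter> p ` V = p ` e" using edge_all by blast

lemma cross_e: "e \<in> E \<Longrightarrow> e' \<in> E \<Longrightarrow> e \<noteq> e' \<Longrightarrow> path_image (\<gamma> e) \<inter> path_image (\<gamma> e') \<subseteq> p ` (e \<inter> e')"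
  using drawn_cross[OF D] by blast

lemma ends_in_image: "e \<in> E \<Longrightarrow> p ` e \<subseteq> path_image (\<gamma> e)"
proof -
  assume e: "e \<in> E"
  have "{pathstart (\<gamma> e), pathfinish (\<gamma> e)} \<subseteq> path_image (\<gamma> e)"
    by (simp add: pathstart_in_path_image pathfinish_in_path_image)
  then show ?thesis using ends_e[OF e] by simp
qed

lemma img_vert: "F \<subseteq> E \<Longrightarrow> img \<gamma> F \<inter> p ` V = p ` \<Union>F"
proof -
  assume F: "F \<subseteq> E"
  have "img \<gamma> F \<inter> p ` V \<subseteq> p ` \<Union>F"
    using vert_e F unfolding img_def by blast
  moreover have "p ` \<Union>F \<subseteq> img \<gamma> F" using ends_in_image F unfolding img_def by blast
  moreover have "p ` \<Union>F \<subseteq> p ` V" using graph_edge_sub[OF G] F by blast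
  ultimately show ?thesis by blast
qed

lemma img_cross:
  assumes "F1 \<subseteq> E" "F2 \<subseteq> E" "F1 \<inter> F2 = {}"
  shows "img \<gamma> F1 \<inter> img \<gamma> F2 \<subseteq> p ` (\<Union>F1 \<inter> \<Union>F2)"
proof
  fix z assume "z \<in> img \<gamma> F1 \<inter> img \<gamma> F2"
  then obtain e1 e2 where e: "e1 \<in> F1" "e2 \<in> F2" "z \<in> path_image (\<gamma> e1)" "z \<in> path_image (\<gamma> e2)"
    unfolding img_def by blast
  then have "e1 \<noteq> e2" using assms(3) by blast
  then have "z \<in> p ` (e1 \<inter> e2)" using cross_e e assms(1,2) by blast
  then show "z \<in> p ` (\<Union>F1 \<inter> \<Union>F2)" using e by blast
qed

lemma eint_eq: "e \<in> E \<Longrightarrow> eint \<gamma> p e = \<gamma> e ` {0<..<1}"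
proof -
  assume e: "e \<in> E"
  have a: "arc (\<gamma> e)" using arc_e e .
  then have inj: "inj_on (\<gamma> e) {0..1}" unfolding arc_def by blast
  have pe: "p ` e = {\<gamma> e 0, \<gamma> e 1}" using ends_e[OF e] by (simp add: pathstart_def pathfinish_def)
  have "path_image (\<gamma> e) = \<gamma> e ` {0..1}" by (simp add: path_image_def)
  moreover have "{0..1::real} = {0<..<1} \<union> {0,1}" by auto
  ultimately have "path_image (\<gamma> e) = \<gamma> e ` {0<..<1} \<union> {\<gamma> e 0, \<gamma> e 1}" by auto
  moreover have "\<gamma> e 0 \<notin> \<gamma> e ` {0<..<1}"
  proof
    assume "\<gamma> e 0 \<in> \<gamma> e ` {0<..<1}"
    then obtain t where t: "t \<in> {0<..<1}" "\<gamma> e 0 = \<gamma> e t" by blast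
    have "(0::real) = t" by (rule inj_onD[OF inj t(2)]) (use t(1) in auto)
    with t show False by simp
  qed
  moreover have "\<gamma> e 1 \<notin> \<gamma> e ` {0<..<1}"
  proof
    assume "\<gamma> e 1 \<in> \<gamma> e ` {0<..<1}"
    then obtain t where t: "t \<in> {0<..<1}" "\<gamma> e 1 = \<gamma> e t" by blast
    have "(1::real) = t" by (rule inj_onD[OF inj t(2)]) (use t(1) in auto)
    with t show False by simp
  qed
  ultimately show ?thesis unfolding eint_def pe by blast
qed

lemma eint_connected: "e \<in> E \<Longrightarrow> connected (eint \<gamma> p e)"
proof -
  assume e: "e \<in> E"
  have "continuous_on {0..1} (\<gamma> e)" using arc_e[OF e] unfolding arc_def path_def by blast
  then have "continuous_on {0<..<1} (\<gamma> e)" by (rule continuous_on_subset) auto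
  then show ?thesis unfolding eint_eq[OF e] by (rule connected_continuous_image) simp
qed

lemma eint_ne: "e \<in> E \<Longrightarrow> eint \<gamma> p e \<noteq> {}"
proof -
  assume e: "e \<in> E"
  have "\<gamma> e (1/2) \<in> \<gamma> e ` {0<..<1}" by auto
  then show ?thesis using eint_eq[OF e] by auto
qed

lemma eint_vert: "e \<in> E \<Longrightarrow> eint \<gamma> p e \<inter> p ` V = {}"
  using vert_e unfolding eint_def by blast

lemma eint_cross: "e \<in> E \<Longrightarrow> e' \<in> E \<Longrightarrow> e \<noteq> e' \<Longrightarrow> eint \<gamma> p e \<inter> path_image (\<gamma> e') = {}"
proof -
  assume a: "e \<in> E" "e' \<in> E" "e \<noteq> e'"
  have "eint \<gamma> p e \<inter> path_image (\<gamma> e') \<subseteq> p ` (e \<inter> e')"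
    using cross_e[OF a] unfolding eint_def by blast
  then show ?thesis unfolding eint_def by blast
qed

lemma eint_img: "e \<in> E \<Longrightarrow> F \<subseteq> E \<Longrightarrow> e \<notin> F \<Longrightarrow> eint \<gamma> p e \<inter> img \<gamma> F = {}"
  unfolding img_def using eint_cross by blast

lemma image_eint: "e \<in> E \<Longrightarrow> path_image (\<gamma> e) = eint \<gamma> p e \<union> p ` e"
  using ends_in_image unfolding eint_def by blast

lemma closure_eint: "e \<in> E \<Longrightarrow> path_image (\<gamma> e) \<subseteq> closure (eint \<gamma> p e)"
proof -
  assume e: "e \<in> E"
  have c: "continuous_on {0..1} (\<gamma> e)" using arc_e[OF e] unfolding arc_def path_def by blast
  have cl: "closure {0<..<1::real} = {0..1}" by simp
  have "\<gamma> e ` closure {0<..<1} \<subseteq> closure (\<gamma> e ` {0<..<1})"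
  proof (rule image_closure_subset)
    show "continuous_on (closure {0<..<1}) (\<gamma> e)" using c cl by simp
    show "closed (closure (\<gamma> e ` {0<..<1}))" by simp
    show "\<gamma> e ` {0<..<1} \<subseteq> closure (\<gamma> e ` {0<..<1})" by (rule closure_subset)
  qed
  then show ?thesis unfolding eint_eq[OF e] path_image_def cl .
qed

lemma edge_side:
  assumes e: "e \<in> E" and U: "open U" and W: "open W" and UW: "U \<inter> W = {}"
    and sub: "eint \<gamma> p e \<subseteq> U \<union> W"
  shows "eint \<gamma> p e \<subseteq> U \<or> eint \<gamma> p e \<subseteq> W"
  using connectedD[OF eint_connected[OF e] U W] UW sub by blast

definition ori :: "'a set \<Rightarrow> 'a \<Rightarrow> real \<Rightarrow> complex" where
  "ori e a = (if pathstart (\<gamma> e) = p a then \<gamma> e else reversepath (\<gamma> e))"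

lemma ori:
  assumes "{a,b} \<in> E"
  shows "arc (ori {a,b} a) \<and> pathstart (ori {a,b} a) = p a \<and> pathfinish (ori {a,b} a) = p b
         \<and> path_image (ori {a,b} a) = path_image (\<gamma> {a,b})"
proof -
  obtain u v where uv: "{a,b} = {u,v}" "u \<noteq> v" "u \<in> V" "v \<in> V" using graph_edge[OF G assms] by blast
  then have ab: "a \<noteq> b" "a \<in> V" "b \<in> V" by (auto simp: doubleton_eq_iff)
  then have pab: "p a \<noteq> p b" using inj_onD[OF inj] by blast
  have ar: "arc (\<gamma> {a,b})" using arc_e[OF assms] .
  have se: "{pathstart (\<gamma> {a,b}), pathfinish (\<gamma> {a,b})} = {p a, p b}" using ends_e[OF assms] by simp
  have ne: "pathstart (\<gamma> {a,b}) \<noteq> pathfinish (\<gamma> {a,b})" using arc_distinct_ends[OF ar] by simp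
  show ?thesis
  proof (cases "pathstart (\<gamma> {a,b}) = p a")
    case True
    then have "pathfinish (\<gamma> {a,b}) = p b" using se ne by (auto simp: doubleton_eq_iff)
    then show ?thesis using True ar by (simp add: ori_def)
  next
    case False
    then have "pathstart (\<gamma> {a,b}) = p b" "pathfinish (\<gamma> {a,b}) = p a" using se by (auto simp: doubleton_eq_iff)
    then show ?thesis using False ar by (simp add: ori_def arc_reversepath)
  qed
qed

fun pc :: "'a list \<Rightarrow> real \<Rightarrow> complex" where
  "pc (a # b # c # xs) = ori {a,b} a +++ pc (b # c # xs)"
| "pc [a, b] = ori {a,b} a"
| "pc _ = linepath 0 0"

lemma pc:
  assumes "distinct xs" "2 \<le> length xs" "pe xs \<subseteq> E"
  shows "arc (pc xs) \<and> pathstart (pc xs) = p (hd xs) \<and> pathfinish (pc xs) = p (last xs)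
         \<and> path_image (pc xs) = img \<gamma> (pe xs)"
  using assms
proof (induction xs rule: pc.induct)
  case (1 a b c xs)
  let ?o = "ori {a,b} a" and ?r = "pc (b # c # xs)"
  have ab: "{a,b} \<in> E" using 1(4) by simp
  have IH: "arc ?r \<and> pathstart ?r = p b \<and> pathfinish ?r = p (last (c # xs)) \<and> path_image ?r = img \<gamma> (pe (b # c # xs))"
    using 1 by simp
  have o: "arc ?o \<and> pathstart ?o = p a \<and> pathfinish ?o = p b \<and> path_image ?o = path_image (\<gamma> {a,b})"
    using ori[OF ab] .
  have nin: "{a,b} \<notin> pe (b # c # xs)" using pe_Union_sub[of "b # c # xs"] 1(2) by auto
  have "img \<gamma> {{a,b}} \<inter> img \<gamma> (pe (b # c # xs)) \<subseteq> p ` (\<Union>{{a,b}} \<inter> \<Union>(pe (b # c # xs)))"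
    by (rule img_cross) (use 1(4) nin in auto)
  also have "\<dots> \<subseteq> p ` {b}" using pe_Union_sub[of "b # c # xs"] 1(2) by auto
  finally have int: "path_image ?o \<inter> path_image ?r \<subseteq> {pathstart ?r}"
    using o IH by (simp add: img_def)
  have "arc (?o +++ ?r)" by (rule arc_join) (use o IH int in auto)
  moreover have "path_image (?o +++ ?r) = img \<gamma> (pe (a # b # c # xs))"
    using o IH by (simp add: path_image_join img_def)
  ultimately show ?case using o IH by simp
next
  case (2 a b)
  then show ?case using ori[of a b] by (simp add: img_def)
qed auto

definition cc :: "'a list \<Rightarrow> real \<Rightarrow> complex" where
  "cc cs = pc cs +++ ori {last cs, hd cs} (last cs)"

lemma cc:
  assumes "cyc E cs"
  shows "simple_path (cc cs) \<and> pathfinish (cc cs) = pathstart (cc cs) \<and> path_image (cc cs) = img \<gamma> (cedges cs)"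
proof -
  have d: "distinct cs" and l: "3 \<le> length cs" and ce: "cedges cs \<subseteq> E" using assms by (auto simp: cyc_def)
  have pe: "pe cs \<subseteq> E" and cl: "{last cs, hd cs} \<in> E" using ce by (auto simp: cedges_def)
  have P: "arc (pc cs) \<and> pathstart (pc cs) = p (hd cs) \<and> pathfinish (pc cs) = p (last cs) \<and> path_image (pc cs) = img \<gamma> (pe cs)"
    using pc[OF d _ pe] l by simp
  have O: "arc (ori {last cs, hd cs} (last cs)) \<and> pathstart (ori {last cs, hd cs} (last cs)) = p (last cs)
     \<and> pathfinish (ori {last cs, hd cs} (last cs)) = p (hd cs) \<and> path_image (ori {last cs, hd cs} (last cs)) = path_image (\<gamma> {last cs, hd cs})"
    using ori[OF cl] .
  have nin: "{last cs, hd cs} \<notin> pe cs" using closing_notin[OF d l] .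
  have "img \<gamma> (pe cs) \<inter> img \<gamma> {{last cs, hd cs}} \<subseteq> p ` (\<Union>(pe cs) \<inter> \<Union>{{last cs, hd cs}})"
    by (rule img_cross) (use pe cl nin in auto)
  also have "\<dots> \<subseteq> {p (hd cs), p (last cs)}" by auto
  finally have int: "path_image (pc cs) \<inter> path_image (ori {last cs, hd cs} (last cs)) \<subseteq>
       {pathstart (pc cs), pathstart (ori {last cs, hd cs} (last cs))}"
    using P O by (simp add: img_def)
  have "simple_path (cc cs)" unfolding cc_def
    by (rule simple_path_join_loop) (use P O int in auto)
  moreover have "pathfinish (cc cs) = pathstart (cc cs)" using P O by (simp add: cc_def)
  moreover have "path_image (cc cs) = img \<gamma> (cedges cs)"
    using P O by (simp add: cc_def path_image_join img_def cedges_def Un_commute)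
  ultimately show ?thesis by blast
qed

lemma jordan:
  assumes "cyc E cs"
  defines "J \<equiv> img \<gamma> (cedges cs)"
  shows "inside J \<noteq> {} \<and> open (inside J) \<and> open (outside J) \<and> closed J \<and> bounded J \<and>
         inside J \<inter> outside J = {} \<and> inside J \<union> outside J = - J"
proof -
  have c: "simple_path (cc cs)" "pathfinish (cc cs) = pathstart (cc cs)" "path_image (cc cs) = J"
    using cc[OF assms(1)] J_def by auto
  have pth: "path (cc cs)" by (rule simple_path_imp_path[OF c(1)])
  have "closed J" using closed_path_image[OF pth] c(3) by simp
  moreover have "bounded J" using bounded_path_image[OF pth] c(3) by simp
  ultimately show ?thesis using Jordan_inside_outside[OF c(1,2)] c(3) by simp
qed

end


definition finv :: "complex \<Rightarrow> complex \<Rightarrow> complex" where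
  "finv z0 z = inverse (z - z0)"

lemma finv_inj: "inj_on (finv z0) (- {z0})"
  unfolding inj_on_def finv_def by auto

lemma finv_cont: "continuous_on (- {z0}) (finv z0)"
  unfolding finv_def by (intro continuous_intros) auto

lemma finv_image:
  assumes "U \<subseteq> - {z0}"
  shows "finv z0 ` U = - {0} \<inter> (\<lambda>w. z0 + inverse w) -` U"
proof
  show "finv z0 ` U \<subseteq> - {0} \<inter> (\<lambda>w. z0 + inverse w) -` U"
    using assms by (auto simp: finv_def)
  show "- {0} \<inter> (\<lambda>w. z0 + inverse w) -` U \<subseteq> finv z0 ` U"
  proof
    fix w assume w: "w \<in> - {0} \<inter> (\<lambda>w. z0 + inverse w) -` U"
    then have "finv z0 (z0 + inverse w) = w" by (simp add: finv_def)
    then show "w \<in> finv z0 ` U" using w by (metis IntD2 image_eqI vimageE)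
  qed
qed

lemma finv_open:
  assumes "open U" "U \<subseteq> - {z0}"
  shows "open (finv z0 ` U)"
proof -
  have "continuous_on (- {0}) (\<lambda>w. z0 + inverse w)" by (intro continuous_intros) auto
  then have "open (- {0} \<inter> (\<lambda>w. z0 + inverse w) -` U)"
    using assms(1) by (intro continuous_open_preimage) auto
  then show ?thesis using finv_image[OF assms(2)] by simp
qed

lemma inv_inside:
  fixes J :: "complex set"
  assumes cJ: "closed J" and bJ: "bounded J" and z0: "z0 \<in> inside J"
  shows "finv z0 ` outside J \<subseteq> inside (finv z0 ` J)"
proof -
  let ?f = "finv z0"
  have oi: "open (inside J)" using cJ by (rule open_inside)
  have oo: "open (outside J)" using cJ by (rule open_outside)
  obtain r where r: "r > 0" "ball z0 r \<subseteq> inside J" using oi z0 open_contains_ball by blast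
  have z0J: "z0 \<notin> J" using z0 inside_no_overlap by blast
  have z0o: "z0 \<notin> outside J" using z0 inside_Int_outside by blast
  define S where "S = ?f ` J"
  define A where "A = ?f ` outside J \<union> {0}"
  define B where "B = ?f ` (inside J - {z0})"
  have Jsub: "J \<subseteq> - {z0}" using z0J by blast
  have osub: "outside J \<subseteq> - {z0}" using z0o by blast
  have isub: "inside J - {z0} \<subseteq> - {z0}" by blast
  have injf: "inj_on ?f (- {z0})" by (rule finv_inj)
  have bA: "bounded A"
  proof -
    have "norm (?f z) \<le> 1 / r" if "z \<in> outside J" for z
    proof -
      have "z \<notin> ball z0 r" using that r(2) inside_Int_outside by blast
      then have "norm (z - z0) \<ge> r" by (simp add: dist_norm norm_minus_commute)
      then have "inverse (norm (z - z0)) \<le> inverse r" using r(1) by (rule le_imp_inverse_le)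
      then show ?thesis by (simp add: finv_def norm_inverse inverse_eq_divide norm_divide)
    qed
    then have "A \<subseteq> cball 0 (1/r)" using r(1) unfolding A_def by auto
    then show ?thesis using bounded_cball bounded_subset by blast
  qed
  have AB: "A \<inter> B = {}"
  proof -
    have "0 \<notin> B" unfolding B_def by (auto simp: finv_def)
    moreover have "?f ` outside J \<inter> ?f ` (inside J - {z0}) = ?f ` (outside J \<inter> (inside J - {z0}))"
      by (rule inj_on_image_Int[OF injf osub isub, symmetric])
    moreover have "outside J \<inter> (inside J - {z0}) = {}" using inside_Int_outside by blast
    ultimately show ?thesis unfolding A_def B_def by auto
  qed
  have cover: "- S \<subseteq> A \<union> B"
  proof
    fix w assume w: "w \<in> - S"
    show "w \<in> A \<union> B"
    proof (cases "w = 0")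
      case True then show ?thesis unfolding A_def by blast
    next
      case False
      define z where "z = z0 + inverse w"
      have fz: "?f z = w" using False by (simp add: z_def finv_def)
      have zz: "z \<noteq> z0" using False by (simp add: z_def)
      have "z \<notin> J" using w fz unfolding S_def by blast
      then have "z \<in> inside J \<or> z \<in> outside J" using inside_Un_outside[of J] by blast
      then show ?thesis using fz zz unfolding A_def B_def by blast
    qed
  qed
  have AS: "?f ` outside J \<inter> S = {}"
  proof -
    have "?f ` outside J \<inter> ?f ` J = ?f ` (outside J \<inter> J)"
      by (rule inj_on_image_Int[OF injf osub Jsub, symmetric])
    then show ?thesis unfolding S_def using outside_no_overlap[of J] by simp
  qed
  have oB: "open B" unfolding B_def
    by (rule finv_open) (use oi in auto)
  have oA: "open A"
  proof -
    have o1: "open (?f ` outside J)" by (rule finv_open[OF oo osub])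
    obtain R where R: "- outside J \<subseteq> ball 0 R"
      using cobounded_outside[OF bJ] bounded_subset_ballD by blast
    define d where "d = 1 / (R + norm z0 + 1)"
    have R0: "R > 0" using R
    proof -
      have "z0 \<in> - outside J" using z0o by blast
      then have "norm z0 < R" using R by auto
      then show ?thesis by (meson le_less_trans norm_ge_zero)
    qed
    have d0: "d > 0" using R0 by (simp add: d_def add_pos_nonneg)
    have "ball 0 d \<subseteq> A"
    proof
      fix w assume w: "w \<in> ball (0::complex) d"
      show "w \<in> A"
      proof (cases "w = 0")
        case True then show ?thesis unfolding A_def by blast
      next
        case False
        define z where "z = z0 + inverse w"
        have fz: "?f z = w" using False by (simp add: z_def finv_def)
        have nw: "norm w < d" using w by simp
        have "norm (inverse w) > R + norm z0 + 1"
        proof -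
          have "norm w > 0" using False by simp
          then have "inverse (norm w) > inverse d" using nw by (simp add: less_imp_inverse_less)
          then show ?thesis using R0 by (simp add: d_def norm_inverse)
        qed
        moreover have "norm z \<ge> norm (inverse w) - norm z0"
          unfolding z_def by (metis add.commute norm_diff_ineq)
        ultimately have "norm z \<ge> R" by linarith
        then have "z \<notin> ball 0 R" by simp
        then have "z \<in> outside J" using R by blast
        then show ?thesis using fz unfolding A_def by blast
      qed
    qed
    then have "A = ?f ` outside J \<union> ball 0 d" unfolding A_def using d0 by auto
    then show ?thesis using o1 by auto
  qed
  show ?thesis
  proof
    fix y assume y: "y \<in> ?f ` outside J"
    have yS: "y \<notin> S" using y AS by blast
    let ?C = "connected_component_set (- S) y"
    have Cc: "connected ?C" by (rule connected_connected_component)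
    have CS: "?C \<subseteq> - S" by (rule connected_component_subset)
    have "?C \<subseteq> A \<union> B" using CS cover by blast
    moreover have "y \<in> ?C" using yS by simp
    moreover have "y \<in> A" using y unfolding A_def by blast
    ultimately have "B \<inter> ?C = {}" using connectedD[OF Cc oA oB] AB by blast
    then have "?C \<subseteq> A" using \<open>?C \<subseteq> A \<union> B\<close> by blast
    then have "bounded ?C" using bA bounded_subset by blast
    then show "y \<in> inside (?f ` J)" using yS unfolding inside_def S_def by blast
  qed
qed

lemma drawn_finv:
  assumes D: "drawn V E p \<gamma>" and G: "graph V E"
    and av: "z0 \<notin> p ` V" and ae: "\<And>e. e \<in> E \<Longrightarrow> z0 \<notin> path_image (\<gamma> e)"
  shows "drawn V E (finv z0 \<circ> p) (\<lambda>e. finv z0 \<circ> \<gamma> e)"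
proof (rule drawnI)
  let ?f = "finv z0"
  have injf: "inj_on ?f (- {z0})" by (rule finv_inj)
  have pV: "p ` V \<subseteq> - {z0}" using av by blast
  show "inj_on (?f \<circ> p) V"
    using comp_inj_on[OF drawn_inj[OF D] inj_on_subset[OF injf pV]] .
next
  fix e assume e: "e \<in> E"
  let ?f = "finv z0"
  have injf: "inj_on ?f (- {z0})" by (rule finv_inj)
  have h: "arc (\<gamma> e) \<and> {pathstart (\<gamma> e), pathfinish (\<gamma> e)} = p ` e \<and> path_image (\<gamma> e) \<inter> p ` V = p ` e"
    using drawn_edges[OF D] e by (rule bspec)
  have pi: "path_image (\<gamma> e) \<subseteq> - {z0}" using ae[OF e] by blast
  have pV: "p ` V \<subseteq> - {z0}" using av by blast
  have "arc (?f \<circ> \<gamma> e)"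
  proof -
    have a: "path (\<gamma> e)" "inj_on (\<gamma> e) {0..1}" using h unfolding arc_def by blast+
    have "continuous_on (path_image (\<gamma> e)) ?f"
      using continuous_on_subset[OF finv_cont pi] .
    then have "path (?f \<circ> \<gamma> e)" using a(1) by (rule path_continuous_image[rotated])
    moreover have "inj_on (?f \<circ> \<gamma> e) {0..1}"
      using comp_inj_on[OF a(2)] inj_on_subset[OF injf pi] by (simp add: path_image_def)
    ultimately show ?thesis unfolding arc_def by blast
  qed
  moreover have "{pathstart (?f \<circ> \<gamma> e), pathfinish (?f \<circ> \<gamma> e)} = (?f \<circ> p) ` e"
  proof -
    have "{pathstart (?f \<circ> \<gamma> e), pathfinish (?f \<circ> \<gamma> e)} = ?f ` {pathstart (\<gamma> e), pathfinish (\<gamma> e)}"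
      by (simp add: pathstart_compose pathfinish_compose)
    also have "\<dots> = ?f ` (p ` e)" using h by simp
    also have "\<dots> = (?f \<circ> p) ` e" by (simp add: image_comp)
    finally show ?thesis .
  qed
  moreover have "path_image (?f \<circ> \<gamma> e) \<inter> (?f \<circ> p) ` V = (?f \<circ> p) ` e"
  proof -
    have "path_image (?f \<circ> \<gamma> e) \<inter> (?f \<circ> p) ` V = ?f ` path_image (\<gamma> e) \<inter> ?f ` (p ` V)"
      by (simp add: path_image_compose image_comp)
    also have "\<dots> = ?f ` (path_image (\<gamma> e) \<inter> p ` V)"
      by (rule inj_on_image_Int[OF injf pi pV, symmetric])
    finally show ?thesis using h by (simp add: image_comp)
  qed
  ultimately show "arc (?f \<circ> \<gamma> e) \<and> {pathstart (?f \<circ> \<gamma> e), pathfinish (?f \<circ> \<gamma> e)} = (?f \<circ> p) ` e \<and>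
        path_image (?f \<circ> \<gamma> e) \<inter> (?f \<circ> p) ` V = (?f \<circ> p) ` e" by blast
next
  fix e e' assume ee: "e \<in> E" "e' \<in> E" "e \<noteq> e'"
  let ?f = "finv z0"
  have injf: "inj_on ?f (- {z0})" by (rule finv_inj)
  have pi: "path_image (\<gamma> e) \<subseteq> - {z0}" "path_image (\<gamma> e') \<subseteq> - {z0}" using ae ee by blast+
  have "path_image (?f \<circ> \<gamma> e) \<inter> path_image (?f \<circ> \<gamma> e') = ?f ` (path_image (\<gamma> e) \<inter> path_image (\<gamma> e'))"
    unfolding path_image_compose by (rule inj_on_image_Int[OF injf pi, symmetric])
  also have "\<dots> \<subseteq> ?f ` (p ` (e \<inter> e'))" using drawn_cross[OF D] ee by blast
  finally show "path_image (?f \<circ> \<gamma> e) \<inter> path_image (?f \<circ> \<gamma> e') \<subseteq> (?f \<circ> p) ` (e \<inter> e')"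
    by (simp add: image_comp)
qed

lemma img_finv: "img (\<lambda>e. finv z0 \<circ> \<gamma> e) F = finv z0 ` img \<gamma> F"
  unfolding img_def path_image_compose by blast


lemma long_cycle:
  assumes G: "graph V E" and ne: "V \<noteq> {}"
    and deg2: "\<And>x. x \<in> V \<Longrightarrow> \<exists>y z. y \<noteq> z \<and> {x,y} \<in> E \<and> {x,z} \<in> E"
  shows "\<exists>cs. cyc E cs"
proof -
  define P where "P = {xs. distinct xs \<and> xs \<noteq> [] \<and> set xs \<subseteq> V \<and> pe xs \<subseteq> E}"
  have fin: "finite V" by (rule graph_fin[OF G])
  have Lsub: "length ` P \<subseteq> {..card V}"
  proof
    fix n assume "n \<in> length ` P"
    then obtain xs where "xs \<in> P" "n = length xs" by blast
    then have "distinct xs" "set xs \<subseteq> V" unfolding P_def by auto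
    then have "length xs \<le> card V" using card_mono[OF fin] distinct_card by metis
    then show "n \<in> {..card V}" using \<open>n = length xs\<close> by simp
  qed
  have finL: "finite (length ` P)" using Lsub finite_subset by blast
  obtain v where v: "v \<in> V" using ne by blast
  have "[v] \<in> P" using v unfolding P_def by simp
  then have neL: "length ` P \<noteq> {}" by blast
  obtain xs where xs: "xs \<in> P" "length xs = Max (length ` P)"
    using Max_in[OF finL neL] by auto
  have maxl: "length zs \<le> length xs" if "zs \<in> P" for zs
    using xs(2) Max_ge[OF finL] that by simp
  obtain x ys where xys: "xs = x # ys" using xs(1) unfolding P_def by (cases xs) auto
  have dx: "distinct xs" and sV: "set xs \<subseteq> V" and peE: "pe xs \<subseteq> E" using xs(1) unfolding P_def by auto
  have xV: "x \<in> V" using sV xys by simp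
  have nb: "w \<in> set ys" if w: "{x,w} \<in> E" for w
  proof (rule ccontr)
    assume nin: "w \<notin> set ys"
    obtain a b where ab: "{x,w} = {a,b}" "a \<noteq> b" "a \<in> V" "b \<in> V" using graph_edge[OF G w] by blast
    then have wx: "w \<noteq> x" and wV: "w \<in> V" by (auto simp: doubleton_eq_iff)
    have "w # xs \<in> P" using nin wx wV dx sV peE w unfolding P_def xys by (auto simp: insert_commute)
    then show False using maxl by fastforce
  qed
  obtain y z where yz: "y \<noteq> z" "{x,y} \<in> E" "{x,z} \<in> E" using deg2[OF xV] by blast
  have "y \<in> set ys" "z \<in> set ys" using nb yz by auto
  then obtain t where t: "t \<in> set ys" "t \<noteq> hd ys" "{x,t} \<in> E" using yz by metis
  obtain as bs where asbs: "ys = as @ t # bs" using split_list[OF t(1)] by blast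
  have asne: "as \<noteq> []" using t(2) asbs by auto
  define cs where "cs = x # as @ [t]"
  have "distinct cs" using dx unfolding cs_def xys asbs by auto
  moreover have "3 \<le> length cs" using asne unfolding cs_def by (cases as) auto
  moreover have "cedges cs \<subseteq> E"
  proof -
    have "pe cs \<subseteq> pe (cs @ bs)" by (rule pe_mono_prefix)
    also have "cs @ bs = xs" unfolding cs_def xys asbs by simp
    finally have "pe cs \<subseteq> E" using peE by blast
    moreover have "{last cs, hd cs} \<in> E" using t(3) unfolding cs_def by (simp add: insert_commute)
    ultimately show ?thesis unfolding cedges_def by blast
  qed
  ultimately show ?thesis unfolding cyc_def by blast
qed


definition girth :: "nat \<Rightarrow> 'a set set \<Rightarrow> bool" where
  "girth g E \<longleftrightarrow> (\<forall>cs. cyc E cs \<longrightarrow> g \<le> length cs)"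

definition DLH :: "nat \<Rightarrow> 'a set \<Rightarrow> 'a set set \<Rightarrow> ('a \<Rightarrow> complex) \<Rightarrow> ('a set \<Rightarrow> real \<Rightarrow> complex) \<Rightarrow> 'a list \<Rightarrow> bool" where
  "DLH g V E p \<gamma> cs \<longleftrightarrow> graph V E \<and> drawn V E p \<gamma> \<and> girth g E \<and> cyc E cs \<and>
     (\<forall>v\<in>V. p v \<in> img \<gamma> (cedges cs) \<union> inside (img \<gamma> (cedges cs))) \<and>
     (\<forall>e\<in>E. path_image (\<gamma> e) \<subseteq> img \<gamma> (cedges cs) \<union> inside (img \<gamma> (cedges cs)))"

definition DLC :: "nat \<Rightarrow> 'a set \<Rightarrow> 'a set set \<Rightarrow> 'a list \<Rightarrow> bool" where
  "DLC g V E cs \<longleftrightarrow> (g - 2) * card E + g + length cs \<le> g * card V"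

definition GBH :: "nat \<Rightarrow> 'a set \<Rightarrow> 'a set set \<Rightarrow> ('a \<Rightarrow> complex) \<Rightarrow> ('a set \<Rightarrow> real \<Rightarrow> complex) \<Rightarrow> bool" where
  "GBH g V E p \<gamma> \<longleftrightarrow> graph V E \<and> drawn V E p \<gamma> \<and> girth g E \<and> V \<noteq> {}"

definition GBC :: "nat \<Rightarrow> 'a set \<Rightarrow> 'a set set \<Rightarrow> bool" where
  "GBC g V E \<longleftrightarrow> (g - 2) * card E + g \<le> g * card V"

lemma girth_sub: "girth g E \<Longrightarrow> E' \<subseteq> E \<Longrightarrow> girth g E'"
  unfolding girth_def cyc_def by blast

lemma graph_finE: "graph V E \<Longrightarrow> finite E"
proof -
  assume G: "graph V E"
  have "E \<subseteq> Pow V" using graph_edge_sub[OF G] by blast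
  then show ?thesis using graph_fin[OF G] finite_subset by blast
qed

lemma cyc_set_sub: "graph V E \<Longrightarrow> cyc E cs \<Longrightarrow> set cs \<subseteq> V"
proof -
  assume G: "graph V E" and c: "cyc E cs"
  have "set cs = \<Union>(cedges cs)" using c cedges_Union unfolding cyc_def by metis
  also have "\<dots> \<subseteq> V" using c graph_edge_sub[OF G] unfolding cyc_def by blast
  finally show ?thesis .
qed

lemma sub_instance:
  assumes G: "graph V E" and D: "drawn V E p \<gamma>" and gi: "girth g E"
    and c1: "cyc E cs1" and c1V: "set cs1 \<subseteq> V"
  defines "J1 \<equiv> img \<gamma> (cedges cs1)"
  defines "V1 \<equiv> set cs1 \<union> {w \<in> V. p w \<in> inside J1}"
  defines "E1 \<equiv> {e \<in> E. path_image (\<gamma> e) \<subseteq> J1 \<union> inside J1}"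
  shows "DLH g V1 E1 p \<gamma> cs1"
proof -
  have ceE: "cedges cs1 \<subseteq> E" using c1 unfolding cyc_def by blast
  have l3: "3 \<le> length cs1" using c1 unfolding cyc_def by blast
  have Jv: "J1 \<inter> p ` V = p ` set cs1"
    using img_vert[OF G D ceE] cedges_Union[OF l3] unfolding J1_def by simp
  have V1V: "V1 \<subseteq> V" unfolding V1_def using c1V by blast
  have E1E: "E1 \<subseteq> E" unfolding E1_def by blast
  have injp: "inj_on p V" using drawn_inj[OF D] .
  have ev: "e \<subseteq> V1" if e: "e \<in> E1" for e
  proof
    fix x assume x: "x \<in> e"
    have eE: "e \<in> E" using e E1E by blast
    have xV: "x \<in> V" using graph_edge_sub[OF G eE] x by blast
    have "p x \<in> path_image (\<gamma> e)" using ends_in_image[OF G D eE] x by blast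
    then have "p x \<in> J1 \<union> inside J1" using e unfolding E1_def by blast
    then show "x \<in> V1"
    proof
      assume "p x \<in> J1"
      then have "p x \<in> p ` set cs1" using Jv xV by blast
      then have "x \<in> set cs1" using injp xV c1V by (auto dest: inj_onD)
      then show ?thesis unfolding V1_def by blast
    qed (use xV in \<open>auto simp: V1_def\<close>)
  qed
  have G1: "graph V1 E1" by (rule graph_sub[OF G V1V E1E]) (use ev in blast)
  have D1: "drawn V1 E1 p \<gamma>" by (rule drawn_sub[OF D V1V E1E]) (use ev in blast)
  have gi1: "girth g E1" by (rule girth_sub[OF gi E1E])
  have cyc1: "cyc E1 cs1"
  proof -
    have "cedges cs1 \<subseteq> E1" unfolding E1_def J1_def img_def using ceE by blast
    then show ?thesis using c1 unfolding cyc_def by blast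
  qed
  have vv: "\<forall>v\<in>V1. p v \<in> J1 \<union> inside J1"
  proof
    fix v assume v: "v \<in> V1"
    show "p v \<in> J1 \<union> inside J1"
    proof (cases "v \<in> set cs1")
      case True
      then have "p v \<in> p ` set cs1" by blast
      then show ?thesis using Jv by blast
    next
      case False then show ?thesis using v unfolding V1_def by blast
    qed
  qed
  have ee: "\<forall>e\<in>E1. path_image (\<gamma> e) \<subseteq> J1 \<union> inside J1" unfolding E1_def by blast
  show ?thesis unfolding DLH_def using G1 D1 gi1 cyc1 vv ee unfolding J1_def by blast
qed


lemma pe_two: "pe [a, b] = {{a,b}}" by simp

lemma pe_ne: "2 \<le> length xs \<Longrightarrow> pe xs \<noteq> {}"
  by (cases xs rule: pe.cases) auto

lemma theta_case0:
  fixes V :: "'a set"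
  assumes g3: "3 \<le> g"
    and IHD: "\<And>V' E' (p'::'a \<Rightarrow> complex) \<gamma>' cs'. card V' + card E' < card V + card E \<Longrightarrow> DLH g V' E' p' \<gamma>' cs' \<Longrightarrow> DLC g V' E' cs'"
    and H: "DLH g V E p \<gamma> cs"
    and hd: "hd cs = u" and v: "v \<in> set cs" and uv: "u \<noteq> v"
    and ks: "distinct ks" "set ks \<inter> set cs = {}" "set ks \<subseteq> V"
    and P: "P = u # ks @ [v]" and peP: "pe P \<subseteq> E" and Pdis: "pe P \<inter> cedges cs = {}"
  shows "DLC g V E cs"
proof -
  have G: "graph V E" and D: "drawn V E p \<gamma>" and gi: "girth g E" and cy: "cyc E cs"
    and HV: "\<forall>w\<in>V. p w \<in> img \<gamma> (cedges cs) \<union> inside (img \<gamma> (cedges cs))"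
    and HE: "\<forall>e\<in>E. path_image (\<gamma> e) \<subseteq> img \<gamma> (cedges cs) \<union> inside (img \<gamma> (cedges cs))"
    using H unfolding DLH_def by blast+
  define J where "J = img \<gamma> (cedges cs)"
  define m where "m = length cs"
  have dcs: "distinct cs" and m3: "3 \<le> m" and ceE: "cedges cs \<subseteq> E" using cy unfolding cyc_def m_def by auto
  have csV: "set cs \<subseteq> V" by (rule cyc_set_sub[OF G cy])
  have finV: "finite V" by (rule graph_fin[OF G])
  have finE: "finite E" by (rule graph_finE[OF G])
  have injp: "inj_on p V" by (rule drawn_inj[OF D])
  have csne: "cs \<noteq> []" using m3 m_def by auto
  have u: "u \<in> set cs" using hd csne by auto
  obtain j where j: "j < m" "cs ! j = v" using v unfolding m_def by (auto simp: in_set_conv_nth)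
  have cs0: "cs ! 0 = u" using hd csne by (simp add: hd_conv_nth)
  have j0: "j \<noteq> 0" using j cs0 uv by (cases j) auto
  define L1 where "L1 = take (Suc j) cs"
  define L2 where "L2 = u # rev (drop j cs)"
  have dj_ne: "drop j cs \<noteq> []" using j m_def by simp
  have L1d: "distinct L1" unfolding L1_def using dcs by simp
  have L1l: "length L1 = Suc j" unfolding L1_def using j m_def by simp
  have L1h: "hd L1 = u" unfolding L1_def using hd csne by (cases cs) auto
  have L1last: "last L1 = v"
  proof -
    have ne: "L1 \<noteq> []" using L1l by auto
    have "last L1 = L1 ! (length L1 - 1)" by (rule last_conv_nth[OF ne])
    then have "last L1 = L1 ! j" using L1l by simp
    then show ?thesis unfolding L1_def using j by simp
  qed
  have u_nd: "u \<notin> set (drop j cs)"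
  proof
    assume "u \<in> set (drop j cs)"
    then obtain i where i: "i < length (drop j cs)" "drop j cs ! i = u" by (auto simp: in_set_conv_nth)
    then have "cs ! (j + i) = cs ! 0" using cs0 by simp
    moreover have "j + i < length cs" using i by simp
    ultimately have "j + i = 0" using nth_eq_iff_index_eq[OF dcs \<open>j + i < length cs\<close>, of 0] csne by simp
    then show False using j0 by simp
  qed
  have L2d: "distinct L2" unfolding L2_def using dcs u_nd by simp
  have L2l: "length L2 = m - j + 1" unfolding L2_def m_def by simp
  have L2h: "hd L2 = u" unfolding L2_def by simp
  have hdj: "hd (drop j cs) = v" using j dj_ne m_def by (simp add: hd_drop_conv_nth)
  have L2last: "last L2 = v" unfolding L2_def using dj_ne hdj by (simp add: last_rev)
  have setL: "set L1 \<union> set L2 = set cs"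
  proof -
    have a: "set cs = set (take (Suc j) cs) \<union> set (drop (Suc j) cs)"
      by (metis append_take_drop_id set_append)
    have b: "set (drop (Suc j) cs) \<subseteq> set (drop j cs)" by (rule set_drop_subset_set_drop) simp
    have c: "set (drop j cs) \<subseteq> set cs" by (rule set_drop_subset)
    have "set cs = set (take (Suc j) cs) \<union> set (drop j cs)" using a b c by blast
    then show ?thesis unfolding L1_def L2_def using u by auto
  qed
  have setLi: "set L1 \<inter> set L2 = {u, v}"
  proof -
    have "set (take (Suc j) cs) \<inter> set (drop (Suc j) cs) = {}"
      using dcs by (metis append_take_drop_id distinct_append)
    moreover have "set (drop j cs) = insert v (set (drop (Suc j) cs))"
      using j m_def by (metis Cons_nth_drop_Suc list.simps(15))
    moreover have "v \<in> set L1" "u \<in> set L1" using L1last L1h L1l by (auto intro: last_in_set hd_in_set)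
    ultimately show ?thesis unfolding L1_def L2_def by auto
  qed
  have peL2: "pe L2 = insert {u, last cs} (pe (drop j cs))"
  proof -
    obtain w rest where wr: "rev (drop j cs) = w # rest" using dj_ne by (cases "rev (drop j cs)") auto
    have w: "w = last cs"
    proof -
      have "w = hd (rev (drop j cs))" using wr by simp
      also have "\<dots> = last (drop j cs)" using dj_ne by (simp add: hd_rev)
      also have "\<dots> = last cs" using j m_def by simp
      finally show ?thesis .
    qed
    have "pe L2 = insert {u, w} (pe (rev (drop j cs)))" unfolding L2_def wr by simp
    then show "pe L2 = insert {u, last cs} (pe (drop j cs))" using w by (simp add: pe_rev)
  qed
  have peL1L2: "pe L1 \<union> pe L2 = cedges cs"
  proof -
    have "pe cs = pe L1 \<union> pe (drop j cs)" unfolding L1_def using pe_take_drop j m_def by blast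
    then show ?thesis unfolding cedges_def using hd peL2 by (auto simp: insert_commute)
  qed
  have cardL1: "card (pe L1) = j" using pe_card[OF L1d] L1l by simp
  have cardL2: "card (pe L2) = m - j" using pe_card[OF L2d] L2l by simp
  have peLdis: "pe L1 \<inter> pe L2 = {}"
  proof -
    have "card (pe L1) + card (pe L2) = card (pe L1 \<union> pe L2) + card (pe L1 \<inter> pe L2)"
      by (rule card_Un_Int) (auto simp: pe_finite)
    moreover have "card (pe L1 \<union> pe L2) = m" using peL1L2 cedges_card[OF dcs] m3 m_def by simp
    ultimately have "card (pe L1 \<inter> pe L2) = 0" using cardL1 cardL2 j m_def by simp
    moreover have "finite (pe L1 \<inter> pe L2)" using pe_finite by blast
    ultimately show ?thesis by simp
  qed
  have L1E: "pe L1 \<subseteq> E" and L2E: "pe L2 \<subseteq> E" using peL1L2 ceE by auto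
  have Pd: "distinct P" unfolding P using ks u v uv by auto
  have Pl: "2 \<le> length P" unfolding P by simp
  have setP: "set P = insert u (insert v (set ks))" unfolding P by auto
  have PV: "set P \<subseteq> V" using setP ks(3) u v csV by auto
  have L1P: "set L1 \<inter> set P = {u, v}"
  proof -
    have "set L1 \<subseteq> set cs" unfolding L1_def by (rule set_take_subset)
    then show ?thesis using setP ks(2) setLi by auto
  qed
  have L2P: "set L2 \<inter> set P = {u, v}"
  proof -
    have "set L2 \<subseteq> set cs" using setL by blast
    then show ?thesis using setP ks(2) setLi by auto
  qed

  have L1ne: "L1 \<noteq> []" using L1l by auto
  have L1cs: "set L1 \<subseteq> set cs" unfolding L1_def by (rule set_take_subset)
  have L2cs: "set L2 \<subseteq> set cs" using setL by blast
  have UL1: "\<Union>(pe L1) = set L1" using pe_Union[of L1] L1l j0 by simp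
  have UL2: "\<Union>(pe L2) = set L2" using pe_Union[of L2] L2l j m_def by simp
  have UP: "\<Union>(pe P) = set P" using pe_Union[OF Pl] .
  have PhdL: "hd P = u" "last P = v" unfolding P by simp_all
  have uV: "u \<in> V" and vV: "v \<in> V" using u v csV by auto
  have ab: "p u \<noteq> p v" using inj_onD[OF injp _ uV vV] uv by blast
  define c1 where "c1 = pc p \<gamma> L1"
  define c2 where "c2 = pc p \<gamma> L2"
  define c where "c = pc p \<gamma> P"
  have C1: "arc c1 \<and> pathstart c1 = p u \<and> pathfinish c1 = p v \<and> path_image c1 = img \<gamma> (pe L1)"
    using pc[OF G D L1d _ L1E] L1l j0 L1h L1last unfolding c1_def by simp
  have C2: "arc c2 \<and> pathstart c2 = p u \<and> pathfinish c2 = p v \<and> path_image c2 = img \<gamma> (pe L2)"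
    using pc[OF G D L2d _ L2E] L2l j m_def L2h L2last unfolding c2_def by simp
  have CP: "arc c \<and> pathstart c = p u \<and> pathfinish c = p v \<and> path_image c = img \<gamma> (pe P)"
    using pc[OF G D Pd Pl peP] PhdL unfolding c_def by simp
  have L1Pdis: "pe L1 \<inter> pe P = {}" using Pdis peL1L2 by blast
  have L2Pdis: "pe L2 \<inter> pe P = {}" using Pdis peL1L2 by blast
  have abin: "{p u, p v} \<subseteq> path_image g" if "pathstart g = p u" "pathfinish g = p v" for g :: "real \<Rightarrow> complex"
    using that pathstart_in_path_image[of g] pathfinish_in_path_image[of g] by simp
  have i12: "path_image c1 \<inter> path_image c2 = {p u, p v}"
  proof
    have "img \<gamma> (pe L1) \<inter> img \<gamma> (pe L2) \<subseteq> p ` (\<Union>(pe L1) \<inter> \<Union>(pe L2))"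
      by (rule img_cross[OF G D L1E L2E peLdis])
    then show "path_image c1 \<inter> path_image c2 \<subseteq> {p u, p v}" using C1 C2 UL1 UL2 setLi by simp
    show "{p u, p v} \<subseteq> path_image c1 \<inter> path_image c2" using abin C1 C2 by blast
  qed
  have i1c: "path_image c1 \<inter> path_image c = {p u, p v}"
  proof
    have "img \<gamma> (pe L1) \<inter> img \<gamma> (pe P) \<subseteq> p ` (\<Union>(pe L1) \<inter> \<Union>(pe P))"
      by (rule img_cross[OF G D L1E peP L1Pdis])
    then show "path_image c1 \<inter> path_image c \<subseteq> {p u, p v}" using C1 CP UL1 UP L1P by simp
    show "{p u, p v} \<subseteq> path_image c1 \<inter> path_image c" using abin C1 CP by blast
  qed
  have i2c: "path_image c2 \<inter> path_image c = {p u, p v}"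
  proof
    have "img \<gamma> (pe L2) \<inter> img \<gamma> (pe P) \<subseteq> p ` (\<Union>(pe L2) \<inter> \<Union>(pe P))"
      by (rule img_cross[OF G D L2E peP L2Pdis])
    then show "path_image c2 \<inter> path_image c \<subseteq> {p u, p v}" using C2 CP UL2 UP L2P by simp
    show "{p u, p v} \<subseteq> path_image c2 \<inter> path_image c" using abin C2 CP by blast
  qed
  have imgU: "img \<gamma> (A \<union> B) = img \<gamma> A \<union> img \<gamma> B" for A B unfolding img_def by blast
  have Jc: "J = path_image c1 \<union> path_image c2" unfolding J_def using C1 C2 peL1L2[symmetric] imgU by simp
  have JJ: "inside J \<noteq> {} \<and> open (inside J) \<and> open (outside J) \<and> closed J \<and> bounded J \<and>
         inside J \<inter> outside J = {} \<and> inside J \<union> outside J = - J"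
    unfolding J_def by (rule jordan[OF G D cy])
  have HE': "\<forall>e\<in>E. path_image (\<gamma> e) \<subseteq> J \<union> inside J" using HE J_def by simp
  have HV': "\<forall>w\<in>V. p w \<in> J \<union> inside J" using HV J_def by simp
  have eJ: "eint \<gamma> p e \<subseteq> inside J" if "e \<in> E" "e \<notin> cedges cs" for e
  proof -
    have "eint \<gamma> p e \<inter> J = {}" unfolding J_def by (rule eint_img[OF G D that(1) ceE that(2)])
    moreover have "eint \<gamma> p e \<subseteq> J \<union> inside J" using HE' that(1) unfolding eint_def by blast
    ultimately show ?thesis by blast
  qed
  have ne12: "path_image c \<inter> inside (path_image c1 \<union> path_image c2) \<noteq> {}"
  proof -
    obtain e0 where e0: "e0 \<in> pe P" using pe_ne[OF Pl] by blast
    have e0E: "e0 \<in> E" using e0 peP by blast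
    have e0c: "e0 \<notin> cedges cs" using e0 Pdis by blast
    obtain z where z: "z \<in> eint \<gamma> p e0" using eint_ne[OF G D e0E] by blast
    have "z \<in> inside J" using eJ[OF e0E e0c] z by blast
    moreover have "z \<in> path_image c" using z e0 CP unfolding eint_def img_def by blast
    ultimately show ?thesis using Jc by blast
  qed
  obtain sp1: "inside (path_image c1 \<union> path_image c) \<inter> inside (path_image c2 \<union> path_image c) = {}"
    and sp2: "inside (path_image c1 \<union> path_image c) \<union> inside (path_image c2 \<union> path_image c) \<union>
           (path_image c - {p u, p v}) = inside (path_image c1 \<union> path_image c2)"
    by (rule split_inside_simple_closed_curve[of c1 "p u" "p v" c2 c])
       (use C1 C2 CP ab i12 i1c i2c ne12 arc_imp_simple_path in auto)
  define J1 where "J1 = path_image c1 \<union> path_image c"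
  define J2 where "J2 = path_image c2 \<union> path_image c"
  have I12: "inside J1 \<inter> inside J2 = {}" using sp1 unfolding J1_def J2_def .
  have I12J: "inside J1 \<union> inside J2 \<union> (path_image c - {p u, p v}) = inside J"
    using sp2 Jc unfolding J1_def J2_def by simp

  define C1 where "C1 = L1 @ rev ks"
  define C2 where "C2 = drop j cs @ u # ks"
  have revP: "rev P = (v # rev ks) @ [u]" unfolding P by simp
  have peP1: "pe P = insert {last (v # rev ks), u} (pe (v # rev ks))"
    using pe_rev[of P] revP pe_snoc[of "v # rev ks" u] by simp
  have peP2: "pe P = insert {last (u # ks), v} (pe (u # ks))"
    using pe_snoc[of "u # ks" v] unfolding P by simp
  have lastC1: "last C1 = last (v # rev ks)" unfolding C1_def using L1last L1ne by (cases "ks = []") auto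
  have hdC1: "hd C1 = u" unfolding C1_def using L1h L1ne by simp
  have peC1: "pe C1 = pe L1 \<union> pe (v # rev ks)" unfolding C1_def using pe_append[OF L1ne, of "rev ks"] L1last by simp
  have ceC1: "cedges C1 = pe L1 \<union> pe P" unfolding cedges_def using lastC1 hdC1 peC1 peP1 by auto
  have hdC2: "hd C2 = v" unfolding C2_def using dj_ne hdj by simp
  have lastC2: "last C2 = last (u # ks)" unfolding C2_def by simp
  have ldj: "last (drop j cs) = last cs" using j m_def by simp
  have peC2: "pe C2 = pe (drop j cs) \<union> insert {last cs, u} (pe (u # ks))"
    unfolding C2_def using pe_append[OF dj_ne, of "u # ks"] ldj by (cases ks) auto
  have ceC2: "cedges C2 = pe L2 \<union> pe P" unfolding cedges_def using lastC2 hdC2 peC2 peP2 peL2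
    by (auto simp: insert_commute)
  have setC1: "set C1 = set L1 \<union> set ks" unfolding C1_def by simp
  have setC2: "set C2 = set L2 \<union> set ks" unfolding C2_def L2_def by auto
  have lenC1: "length C1 = Suc j + length ks" unfolding C1_def using L1l by simp
  have lenC2: "length C2 = m - j + 1 + length ks" unfolding C2_def m_def by simp
  have dC1: "distinct C1" unfolding C1_def using L1d ks(1) ks(2) L1cs by auto
  have dC2: "distinct C2"
  proof -
    have "distinct (drop j cs)" using dcs by simp
    moreover have "set (drop j cs) \<inter> set ks = {}" using ks(2) set_drop_subset[of j cs] by blast
    moreover have "u \<notin> set ks" using ks(2) u by blast
    ultimately show ?thesis unfolding C2_def using u_nd ks(1) by auto
  qed
  have two: "xs = [hd xs, last xs]" if "length xs = 2" for xs :: "'a list"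
    using that by (cases xs; cases "tl xs") auto
  have nP: "\<not> (ks = [] \<and> pe Lx = {{u,v}} \<and> pe Lx \<subseteq> cedges cs)" for Lx
  proof
    assume a: "ks = [] \<and> pe Lx = {{u,v}} \<and> pe Lx \<subseteq> cedges cs"
    then have "pe P = {{u,v}}" unfolding P by simp
    then show False using a Pdis by blast
  qed
  have l3C1: "3 \<le> length C1"
  proof (rule ccontr)
    assume "\<not> 3 \<le> length C1"
    then have "length ks = 0 \<and> j = 1" using lenC1 j0 by arith
    then have "ks = []" "length L1 = 2" using L1l by auto
    then have "L1 = [u, v]" using two[of L1] L1h L1last by simp
    then have "pe L1 = {{u,v}}" by simp
    then show False using nP[of L1] \<open>ks = []\<close> peL1L2 by blast
  qed
  have l3C2: "3 \<le> length C2"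
  proof (rule ccontr)
    assume "\<not> 3 \<le> length C2"
    then have "length ks = 0 \<and> m - j = 1" using lenC2 j m_def by arith
    then have "ks = []" "length L2 = 2" using L2l by auto
    then have "L2 = [u, v]" using two[of L2] L2h L2last by simp
    then have "pe L2 = {{u,v}}" by simp
    then show False using nP[of L2] \<open>ks = []\<close> peL1L2 by blast
  qed
  have cyC1: "cyc E C1" unfolding cyc_def using dC1 l3C1 ceC1 L1E peP by blast
  have cyC2: "cyc E C2" unfolding cyc_def using dC2 l3C2 ceC2 L2E peP by blast
  have C1V: "set C1 \<subseteq> V" using setC1 L1cs csV ks(3) by blast
  have C2V: "set C2 \<subseteq> V" using setC2 L2cs csV ks(3) by blast
  have J1img: "img \<gamma> (cedges C1) = J1" unfolding J1_def using ceC1 imgU C1 CP by simp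
  have J2img: "img \<gamma> (cedges C2) = J2" unfolding J2_def using ceC2 imgU C2 CP by simp
  define V1 where "V1 = set C1 \<union> {w \<in> V. p w \<in> inside J1}"
  define E1 where "E1 = {e \<in> E. path_image (\<gamma> e) \<subseteq> J1 \<union> inside J1}"
  define V2 where "V2 = set C2 \<union> {w \<in> V. p w \<in> inside J2}"
  define E2 where "E2 = {e \<in> E. path_image (\<gamma> e) \<subseteq> J2 \<union> inside J2}"
  have H1: "DLH g V1 E1 p \<gamma> C1"
    using sub_instance[OF G D gi cyC1 C1V] unfolding J1img V1_def E1_def .
  have H2: "DLH g V2 E2 p \<gamma> C2"
    using sub_instance[OF G D gi cyC2 C2V] unfolding J2img V2_def E2_def .

  have I1J: "inside J1 \<subseteq> inside J" and I2J: "inside J2 \<subseteq> inside J" using I12J by blast+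
  have JnI: "J \<inter> inside J = {}" by (rule inside_no_overlap[THEN trans[OF Int_commute]])
  have cJ: "path_image c1 \<subseteq> J" "path_image c2 \<subseteq> J" using Jc by blast+
  have J1I2: "J1 \<inter> inside J2 = {}"
  proof -
    have "path_image c \<inter> inside J2 = {}" using inside_no_overlap[of J2] unfolding J2_def by blast
    moreover have "path_image c1 \<inter> inside J2 = {}" using cJ I2J JnI by blast
    ultimately show ?thesis unfolding J1_def by blast
  qed
  have J2I1: "J2 \<inter> inside J1 = {}"
  proof -
    have "path_image c \<inter> inside J1 = {}" using inside_no_overlap[of J1] unfolding J1_def by blast
    moreover have "path_image c2 \<inter> inside J1 = {}" using cJ I1J JnI by blast
    ultimately show ?thesis unfolding J2_def by blast
  qed
  have ceC1E: "cedges C1 \<subseteq> E" using cyC1 unfolding cyc_def by blast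
  have ceC2E: "cedges C2 \<subseteq> E" using cyC2 unfolding cyc_def by blast
  have pC1: "p ` set C1 \<subseteq> J1"
    using img_vert[OF G D ceC1E] cedges_Union[OF l3C1] J1img by blast
  have pC2: "p ` set C2 \<subseteq> J2"
    using img_vert[OF G D ceC2E] cedges_Union[OF l3C2] J2img by blast
  have V1V: "V1 \<subseteq> V" unfolding V1_def using C1V by blast
  have V2V: "V2 \<subseteq> V" unfolding V2_def using C2V by blast
  have E1E: "E1 \<subseteq> E" unfolding E1_def by blast
  have E2E: "E2 \<subseteq> E" unfolding E2_def by blast
  have notin: "e \<notin> Ei" if e: "e \<in> pe Lo" and LoE: "pe Lo \<subseteq> E" and Lo: "path_image (\<gamma> e) \<subseteq> J"
    and Ei: "Ei = {e \<in> E. path_image (\<gamma> e) \<subseteq> img \<gamma> F \<union> inside (img \<gamma> F)}"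
    and FE: "F \<subseteq> E" and eF: "e \<notin> F" and IJ: "inside (img \<gamma> F) \<subseteq> inside J" for e Lo Ei F
  proof
    assume "e \<in> Ei"
    then have sub: "path_image (\<gamma> e) \<subseteq> img \<gamma> F \<union> inside (img \<gamma> F)" using Ei by blast
    have eE: "e \<in> E" using e LoE by blast
    obtain z where z: "z \<in> eint \<gamma> p e" using eint_ne[OF G D eE] by blast
    have zJ: "z \<in> J" using z Lo unfolding eint_def by blast
    then have "z \<notin> inside (img \<gamma> F)" using IJ JnI by blast
    then have "z \<in> img \<gamma> F" using sub z unfolding eint_def by blast
    then show False using eint_img[OF G D eE FE eF] z by blast
  qed
  have E1s: "E1 \<subset> E"
  proof -
    have "pe L2 \<noteq> {}" by (rule pe_ne) (use L2l j m_def in simp)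
    then obtain e where e: "e \<in> pe L2" by blast
    have "path_image (\<gamma> e) \<subseteq> J" using e C2 cJ unfolding img_def by blast
    moreover have "e \<notin> cedges C1" using e ceC1 peLdis L2Pdis by blast
    moreover have "inside (img \<gamma> (cedges C1)) \<subseteq> inside J" using I1J J1img by simp
    ultimately have "e \<notin> E1" using notin[OF e L2E _ _ ceC1E] unfolding E1_def J1img[symmetric] by blast
    then show ?thesis using E1E e L2E by blast
  qed
  have E2s: "E2 \<subset> E"
  proof -
    have "pe L1 \<noteq> {}" by (rule pe_ne) (use L1l j0 in simp)
    then obtain e where e: "e \<in> pe L1" by blast
    have "path_image (\<gamma> e) \<subseteq> J" using e C1 cJ unfolding img_def by blast
    moreover have "e \<notin> cedges C2" using e ceC2 peLdis L1Pdis by blast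
    moreover have "inside (img \<gamma> (cedges C2)) \<subseteq> inside J" using I2J J2img by simp
    ultimately have "e \<notin> E2" using notin[OF e L1E _ _ ceC2E] unfolding E2_def J2img[symmetric] by blast
    then show ?thesis using E2E e L1E by blast
  qed
  have cV1: "card V1 \<le> card V" using card_mono[OF finV V1V] .
  have cV2: "card V2 \<le> card V" using card_mono[OF finV V2V] .
  have cE1: "card E1 < card E" using psubset_card_mono[OF finE E1s] .
  have cE2: "card E2 < card E" using psubset_card_mono[OF finE E2s] .
  have D1: "DLC g V1 E1 C1" by (rule IHD[OF _ H1]) (use cV1 cE1 in simp)
  have D2: "DLC g V2 E2 C2" by (rule IHD[OF _ H2]) (use cV2 cE2 in simp)
  have Vcov: "V \<subseteq> V1 \<union> V2"
  proof
    fix w assume w: "w \<in> V"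
    have "p w \<in> J \<union> inside J" using HV' w by blast
    then show "w \<in> V1 \<union> V2"
    proof
      assume "p w \<in> J"
      then have "p w \<in> p ` set cs" using img_vert[OF G D ceE] cedges_Union[OF cy[unfolded cyc_def, THEN conjunct2, THEN conjunct1]] w
        unfolding J_def by blast
      then have "w \<in> set cs" using inj_onD[OF injp] w csV by blast
      then show ?thesis using setL setC1 setC2 unfolding V1_def V2_def by blast
    next
      assume "p w \<in> inside J"
      then have "p w \<in> inside J1 \<or> p w \<in> inside J2 \<or> p w \<in> path_image c" using I12J by blast
      then show ?thesis
      proof (elim disjE)
        assume "p w \<in> path_image c"
        then have "p w \<in> p ` set P" using img_vert[OF G D peP] UP CP w by blast
        then have "w \<in> set P" using inj_onD[OF injp] w PV by blast
        then show ?thesis using setP setC1 L1h L1last L1ne unfolding V1_def by (auto intro: hd_in_set last_in_set)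
      qed (use w in \<open>auto simp: V1_def V2_def\<close>)
    qed
  qed
  have Vint: "V1 \<inter> V2 \<subseteq> set P"
  proof
    fix w assume w: "w \<in> V1 \<inter> V2"
    show "w \<in> set P"
    proof (cases "w \<in> set C1")
      case True
      then have "p w \<in> J1" using pC1 by blast
      then have "p w \<notin> inside J2" using J1I2 by blast
      then have "w \<in> set C2" using w unfolding V2_def by blast
      then show ?thesis using True setC1 setC2 setLi setP by auto
    next
      case False
      then have "p w \<in> inside J1" using w unfolding V1_def by blast
      then have "p w \<notin> J2" "p w \<notin> inside J2" using J2I1 I12 by blast+
      then show ?thesis using w pC2 unfolding V2_def by blast
    qed
  qed
  have Ecov: "E \<subseteq> E1 \<union> E2"
  proof
    fix e assume eE: "e \<in> E"
    show "e \<in> E1 \<union> E2"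
    proof (cases "e \<in> pe L1 \<or> e \<in> pe P")
      case True
      then have "path_image (\<gamma> e) \<subseteq> J1" using C1 CP unfolding J1_def img_def by blast
      then show ?thesis using eE unfolding E1_def by blast
    next
      case F1: False
      show ?thesis
      proof (cases "e \<in> pe L2")
        case True
        then have "path_image (\<gamma> e) \<subseteq> J2" using C2 unfolding J2_def img_def by blast
        then show ?thesis using eE unfolding E2_def by blast
      next
        case False
        then have ec: "e \<notin> cedges cs" using F1 peL1L2 by blast
        have "eint \<gamma> p e \<subseteq> inside J" using eJ[OF eE ec] .
        moreover have "eint \<gamma> p e \<inter> path_image c = {}"
          using eint_img[OF G D eE peP] F1 CP by simp
        ultimately have "eint \<gamma> p e \<subseteq> inside J1 \<union> inside J2" using I12J by blast
        moreover have "closed J1" "closed J2"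
        proof -
          have ar: "arc c1" "arc c2" "arc c" using C1 C2 CP by blast+
          have "closed (path_image c1)" "closed (path_image c2)" "closed (path_image c)"
            using closed_path_image[OF arc_imp_path[OF ar(1)]] closed_path_image[OF arc_imp_path[OF ar(2)]]
              closed_path_image[OF arc_imp_path[OF ar(3)]] by blast+
          then show "closed J1" "closed J2" unfolding J1_def J2_def by auto
        qed
        ultimately have "eint \<gamma> p e \<subseteq> inside J1 \<or> eint \<gamma> p e \<subseteq> inside J2"
          using edge_side[OF G D eE open_inside open_inside I12] by blast
        then show ?thesis
        proof
          assume "eint \<gamma> p e \<subseteq> inside J1"
          then have "closure (eint \<gamma> p e) \<subseteq> J1 \<union> inside J1"
            using closure_mono closure_inside_subset[OF \<open>closed J1\<close>] by blast
          then show ?thesis using closure_eint[OF G D eE] eE unfolding E1_def by blast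
        next
          assume "eint \<gamma> p e \<subseteq> inside J2"
          then have "closure (eint \<gamma> p e) \<subseteq> J2 \<union> inside J2"
            using closure_mono closure_inside_subset[OF \<open>closed J2\<close>] by blast
          then show ?thesis using closure_eint[OF G D eE] eE unfolding E2_def by blast
        qed
      qed
    qed
  qed
  have Pint: "pe P \<subseteq> E1 \<inter> E2"
  proof -
    have "\<forall>e\<in>pe P. path_image (\<gamma> e) \<subseteq> path_image c" using CP unfolding img_def by blast
    then show ?thesis using peP unfolding E1_def E2_def J1_def J2_def by blast
  qed
  have finV1: "finite V1" "finite V2" using finV V1V V2V finite_subset by blast+
  have finE1: "finite E1" "finite E2" using finE E1E E2E finite_subset by blast+
  have nV: "card V1 + card V2 \<le> card V + (length ks + 2)"
  proof -
    have "card V1 + card V2 = card (V1 \<union> V2) + card (V1 \<inter> V2)" by (rule card_Un_Int[OF finV1])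
    moreover have "card (V1 \<union> V2) \<le> card V" using card_mono[OF finV] V1V V2V by blast
    moreover have "card (V1 \<inter> V2) \<le> card (set P)" using card_mono[OF _ Vint] by simp
    moreover have "card (set P) = length ks + 2" using distinct_card[OF Pd] unfolding P by simp
    ultimately show ?thesis by linarith
  qed
  have nE: "card E + (length ks + 1) \<le> card E1 + card E2"
  proof -
    have "card E1 + card E2 = card (E1 \<union> E2) + card (E1 \<inter> E2)" by (rule card_Un_Int[OF finE1])
    moreover have "card E \<le> card (E1 \<union> E2)" using card_mono[OF _ Ecov] finE1 by blast
    moreover have "card (pe P) \<le> card (E1 \<inter> E2)" using card_mono[OF _ Pint] finE1 by blast
    moreover have "card (pe P) = length ks + 1" using pe_card[OF Pd] unfolding P by simp
    ultimately show ?thesis by linarith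
  qed
  define r where "r = length ks"
  define n where "n = card V"
  define e where "e = card E"
  have d1: "(g - 2) * card E1 + g + (Suc j + r) \<le> g * card V1" using D1 lenC1 unfolding DLC_def r_def by simp
  have d2: "(g - 2) * card E2 + g + (m - j + 1 + r) \<le> g * card V2" using D2 lenC2 unfolding DLC_def r_def by simp
  have a1: "(g - 2) * (e + (r + 1)) \<le> (g - 2) * card E1 + (g - 2) * card E2"
    using mult_le_mono2[OF nE, of "g - 2"] unfolding e_def r_def by (simp add: distrib_left)
  have a2: "g * card V1 + g * card V2 \<le> g * (n + (r + 2))"
    using mult_le_mono2[OF nV, of g] unfolding n_def r_def by (simp add: algebra_simps)
  have a3: "(g - 2) * (e + (r + 1)) = (g - 2) * e + (g - 2) * r + (g - 2)" by (simp add: distrib_left)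
  have a4: "g * (n + (r + 2)) = g * n + g * r + 2 * g" by (simp add: algebra_simps)
  have a5: "(g - 2) * r + 2 * r = g * r"
  proof -
    have "(g - 2) * r + 2 * r = (g - 2 + 2) * r" by (simp only: add_mult_distrib)
    also have "g - 2 + 2 = g" using g3 by simp
    finally show ?thesis .
  qed
  have jm: "j < m" using j by simp
  have "(g - 2) * e + g + m \<le> g * n" using d1 d2 a1 a2 a3 a4 a5 jm g3 by linarith
  then show ?thesis unfolding DLC_def e_def n_def m_def .
qed


lemma theta_case:
  fixes V :: "'a set"
  assumes g3: "3 \<le> g"
    and IHD: "\<And>V' E' (p'::'a \<Rightarrow> complex) \<gamma>' cs'. card V' + card E' < card V + card E \<Longrightarrow> DLH g V' E' p' \<gamma>' cs' \<Longrightarrow> DLC g V' E' cs'"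
    and H: "DLH g V E p \<gamma> cs"
    and u: "u \<in> set cs" and v: "v \<in> set cs" and uv: "u \<noteq> v"
    and ks: "distinct ks" "set ks \<inter> set cs = {}" "set ks \<subseteq> V"
    and peP: "pe (u # ks @ [v]) \<subseteq> E" and Pdis: "pe (u # ks @ [v]) \<inter> cedges cs = {}"
  shows "DLC g V E cs"
proof -
  have cy: "cyc E cs" using H unfolding DLH_def by blast
  obtain cs' where cs': "cyc E cs'" "cedges cs' = cedges cs" "set cs' = set cs" "length cs' = length cs" "hd cs' = u"
    using cyc_rotate_hd[OF cy u] by blast
  have H': "DLH g V E p \<gamma> cs'" using H cs' unfolding DLH_def by simp
  have "DLC g V E cs'"
    apply (rule theta_case0[where V=V and E=E and p=p and \<gamma>=\<gamma> and cs=cs' and u=u and v=v and ks=ks and P="u # ks @ [v]"])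
         apply (rule g3)
        apply (rule IHD, assumption, assumption)
       apply (rule H')
      apply (rule cs'(5))
    using v cs' uv ks peP Pdis by auto
  then show ?thesis using cs'(4) unfolding DLC_def by simp
qed

lemma rpath_facts:
  assumes "rtrancl_path R a zs b"
  shows "pe (a # zs) \<subseteq> {{s,t} | s t. R s t} \<and> set zs \<subseteq> {t. \<exists>s. R s t} \<and> last (a # zs) = b"
  using assms
proof (induction rule: rtrancl_path.induct)
  case (base x) then show ?case by simp
next
  case (step x y ys z)
  then show ?case by (cases ys) auto
qed

lemma disk_step:
  fixes V :: "'a set"
  assumes g3: "3 \<le> g"
    and IHD: "\<And>V' E' (p'::'a \<Rightarrow> complex) \<gamma>' cs'. card V' + card E' < card V + card E \<Longrightarrow> DLH g V' E' p' \<gamma>' cs' \<Longrightarrow> DLC g V' E' cs'"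
    and IHG: "\<And>V' E' (p'::'a \<Rightarrow> complex) \<gamma>'. card V' + card E' < card V + card E \<Longrightarrow> GBH g V' E' p' \<gamma>' \<Longrightarrow> GBC g V' E'"
    and H: "DLH g V E p \<gamma> cs"
  shows "DLC g V E cs"
proof -
  have G: "graph V E" and D: "drawn V E p \<gamma>" and gi: "girth g E" and cy: "cyc E cs"
    and HV: "\<forall>w\<in>V. p w \<in> img \<gamma> (cedges cs) \<union> inside (img \<gamma> (cedges cs))"
    and HE: "\<forall>e\<in>E. path_image (\<gamma> e) \<subseteq> img \<gamma> (cedges cs) \<union> inside (img \<gamma> (cedges cs))"
    using H unfolding DLH_def by blast+
  have dcs: "distinct cs" and m3: "3 \<le> length cs" and ceE: "cedges cs \<subseteq> E" using cy unfolding cyc_def by auto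
  have csV: "set cs \<subseteq> V" by (rule cyc_set_sub[OF G cy])
  have finV: "finite V" by (rule graph_fin[OF G])
  have finE: "finite E" by (rule graph_finE[OF G])
  have Uce: "\<Union>(cedges cs) = set cs" by (rule cedges_Union[OF m3])
  show ?thesis
  proof (cases "\<exists>e\<in>E. e \<notin> cedges cs \<and> e \<subseteq> set cs")
    case True
    then obtain e where e: "e \<in> E" "e \<notin> cedges cs" "e \<subseteq> set cs" by blast
    obtain u v where uv: "e = {u,v}" "u \<noteq> v" using graph_edge[OF G e(1)] by blast
    show ?thesis
      apply (rule theta_case[where V=V and E=E and p=p and \<gamma>=\<gamma> and cs=cs and u=u and v=v and ks="[]"])
         apply (rule g3)
        apply (rule IHD, assumption, assumption)
       apply (rule H)
      using e uv by auto
  next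
    case noch: False
    show ?thesis
    proof (cases "\<exists>w\<in>V. w \<notin> set cs")
      case True
      then obtain w where w: "w \<in> V" "w \<notin> set cs" by blast
      define R where "R = (\<lambda>x y. x \<in> V - set cs \<and> y \<in> V - set cs \<and> {x,y} \<in> E)"
      define K where "K = {y. R\<^sup>*\<^sup>* w y}"
      define A where "A = {c \<in> set cs. \<exists>y\<in>K. {c,y} \<in> E}"
      have Kin: "K \<subseteq> V - set cs"
      proof
        fix y assume "y \<in> K"
        then have "R\<^sup>*\<^sup>* w y" unfolding K_def by simp
        then show "y \<in> V - set cs" by (induction rule: rtranclp_induct) (use w in \<open>auto simp: R_def\<close>)
      qed
      have wK: "w \<in> K" unfolding K_def by simp
      have Kcl: "y \<in> K" if "x \<in> K" "y \<in> V - set cs" "{x,y} \<in> E" for x y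
      proof -
        have "R x y" using that Kin unfolding R_def by blast
        then show ?thesis using that(1) unfolding K_def by (simp add: rtranclp.rtrancl_into_rtrancl)
      qed
      have symR: "symp R" unfolding R_def symp_def by (auto simp: insert_commute)
      show ?thesis
      proof (cases "\<exists>u v. u \<in> A \<and> v \<in> A \<and> u \<noteq> v")
        case True
        then obtain u v where uv: "u \<in> A" "v \<in> A" "u \<noteq> v" by blast
        obtain x where x: "x \<in> K" "{u,x} \<in> E" using uv(1) unfolding A_def by blast
        obtain y where y: "y \<in> K" "{v,y} \<in> E" using uv(2) unfolding A_def by blast
        have "R\<^sup>*\<^sup>* w x" "R\<^sup>*\<^sup>* w y" using x y unfolding K_def by auto
        then have "R\<^sup>*\<^sup>* x w" using sympD[OF symp_rtranclp[OF symR]] by blast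
        then have "R\<^sup>*\<^sup>* x y" using \<open>R\<^sup>*\<^sup>* w y\<close> by (rule rtranclp_trans)
        then obtain zs0 where "rtrancl_path R x zs0 y" using rtranclp_eq_rtrancl_path by metis
        then obtain zs where zs: "rtrancl_path R x zs y" "distinct (x # zs)"
          using rtrancl_path_distinct by metis
        have rp: "pe (x # zs) \<subseteq> {{s,t} | s t. R s t}" "set zs \<subseteq> {t. \<exists>s. R s t}" "last (x # zs) = y"
          using rpath_facts[OF zs(1)] by blast+
        define ks where "ks = x # zs"
        have ksin: "set ks \<subseteq> V - set cs" unfolding ks_def using x(1) Kin rp(2) unfolding R_def by auto
        have peks: "pe ks \<subseteq> E" using rp(1) unfolding ks_def R_def by blast
        have Pe: "pe (u # ks @ [v]) = insert {u,x} (insert {y, v} (pe ks))"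
          using pe_snoc[of ks v] rp(3) unfolding ks_def by simp
        have peP: "pe (u # ks @ [v]) \<subseteq> E" using Pe peks x(2) y(2) by (auto simp: insert_commute)
        have meet: "\<forall>e \<in> pe (u # ks @ [v]). e \<inter> set ks \<noteq> {}"
        proof -
          have "y \<in> set ks" using rp(3) unfolding ks_def by (metis last_in_set list.distinct(1))
          moreover have "\<forall>e\<in>pe ks. e \<inter> set ks \<noteq> {}"
          proof
            fix e assume e: "e \<in> pe ks"
            then obtain s t where "e = {s,t}" using rp(1) unfolding ks_def by blast
            moreover have "e \<subseteq> set ks" using e pe_Union_sub[of ks] by blast
            ultimately show "e \<inter> set ks \<noteq> {}" by blast
          qed
          ultimately show ?thesis using Pe unfolding ks_def by auto
        qed
        have Pdis: "pe (u # ks @ [v]) \<inter> cedges cs = {}"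
        proof -
          have ce: "\<forall>e\<in>cedges cs. e \<subseteq> set cs" using Uce by blast
          have "e \<notin> cedges cs" if e: "e \<in> pe (u # ks @ [v])" for e
          proof
            assume ec: "e \<in> cedges cs"
            obtain z where z: "z \<in> e" "z \<in> set ks" using meet e by blast
            have "z \<in> set cs" using ce ec z(1) by blast
            then show False using z(2) ksin by blast
          qed
          then show ?thesis by blast
        qed
        show ?thesis
          apply (rule theta_case[where V=V and E=E and p=p and \<gamma>=\<gamma> and cs=cs and u=u and v=v and ks=ks])
             apply (rule g3)
            apply (rule IHD, assumption, assumption)
           apply (rule H)
          using uv zs(2) ksin peP Pdis by (auto simp: A_def ks_def)
      next
        case False
        then have A1: "\<forall>a\<in>A. \<forall>b\<in>A. a = b" by blast
        have finA: "finite A" unfolding A_def by simp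
        have cA: "card A \<le> 1" using card_le_Suc0_iff_eq[OF finA] A1 by simp
        have Acs: "A \<subseteq> set cs" unfolding A_def by blast
        define V' where "V' = V - K"
        define E' where "E' = {e \<in> E. e \<inter> K = {}}"
        define VK where "VK = K \<union> A"
        define EK where "EK = {e \<in> E. e \<subseteq> K \<union> A}"
        have V'V: "V' \<subseteq> V" and E'E: "E' \<subseteq> E" unfolding V'_def E'_def by blast+
        have e'v: "\<forall>e\<in>E'. e \<subseteq> V'" using graph_edge_sub[OF G] unfolding E'_def V'_def by blast
        have H': "DLH g V' E' p \<gamma> cs"
        proof -
          have "graph V' E'" by (rule graph_sub[OF G V'V E'E e'v])
          moreover have "drawn V' E' p \<gamma>" by (rule drawn_sub[OF D V'V E'E e'v])
          moreover have "girth g E'" by (rule girth_sub[OF gi E'E])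
          moreover have "cyc E' cs"
          proof -
            have "cedges cs \<subseteq> E'" using ceE Uce Kin unfolding E'_def by blast
            then show ?thesis using cy unfolding cyc_def by blast
          qed
          ultimately show ?thesis unfolding DLH_def using HV HE V'V E'E by blast
        qed
        have KV: "K \<subseteq> V" using Kin by blast
        have finK: "finite K" using finite_subset[OF KV finV] .
        have cV: "card V = card V' + card K"
          unfolding V'_def using card_Diff_subset[OF finK KV] card_mono[OF finV KV] by simp
        have cK: "card K \<ge> 1" using finK wK by (metis One_nat_def Suc_leI card_gt_0_iff empty_iff)
        have cE': "card E' \<le> card E" using card_mono[OF finE E'E] .
        have D': "DLC g V' E' cs" by (rule IHD[OF _ H']) (use cV cK cE' in simp)
        have VKV: "VK \<subseteq> V" unfolding VK_def using KV Acs csV by blast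
        have EKE: "EK \<subseteq> E" unfolding EK_def by blast
        have ekv: "\<forall>e\<in>EK. e \<subseteq> VK" unfolding EK_def VK_def by blast
        have HK: "GBH g VK EK p \<gamma>"
          unfolding GBH_def using graph_sub[OF G VKV EKE ekv] drawn_sub[OF D VKV EKE ekv] girth_sub[OF gi EKE]
            wK VK_def by blast
        have cVK: "card VK < card V"
        proof -
          have "card (set cs) = length cs" using distinct_card[OF dcs] .
          then have "\<not> set cs \<subseteq> A"
          proof -
            assume cl: "card (set cs) = length cs"
            show "\<not> set cs \<subseteq> A"
            proof
              assume "set cs \<subseteq> A"
              then have "card (set cs) \<le> card A" by (rule card_mono[OF finA])
              then show False using cA m3 cl by linarith
            qed
          qed
          then obtain c where c: "c \<in> set cs" "c \<notin> A" by blast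
          then have "c \<notin> VK" using Kin unfolding VK_def by blast
          then have "VK \<subset> V" using VKV c csV by blast
          then show ?thesis using psubset_card_mono[OF finV] by blast
        qed
        have cEK: "card EK \<le> card E" using card_mono[OF finE EKE] .
        have GK: "GBC g VK EK" by (rule IHG[OF _ HK]) (use cVK cEK in simp)
        have Ecov: "E \<subseteq> E' \<union> EK"
        proof
          fix e assume eE: "e \<in> E"
          show "e \<in> E' \<union> EK"
          proof (cases "e \<inter> K = {}")
            case True then show ?thesis using eE unfolding E'_def by blast
          next
            case False
            then obtain x where x: "x \<in> e" "x \<in> K" by blast
            obtain a b where ab: "e = {a,b}" "a \<noteq> b" "a \<in> V" "b \<in> V" using graph_edge[OF G eE] by blast
            obtain y where y: "e = {x,y}" using ab x(1) by blast
            have yV: "y \<in> V" using ab y by (auto simp: doubleton_eq_iff)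
            have "y \<in> K \<union> A"
            proof (cases "y \<in> set cs")
              case True
              have "{y,x} \<in> E" using eE y by (simp add: insert_commute)
              then show ?thesis using True x(2) unfolding A_def by blast
            next
              case False
              then show ?thesis using Kcl[OF x(2) _ ] yV eE y by blast
            qed
            then have "e \<subseteq> K \<union> A" using y x(2) by blast
            then show ?thesis using eE unfolding EK_def by blast
          qed
        qed
        have finE': "finite E'" "finite EK" using finE E'E EKE finite_subset by blast+
        have cE: "card E \<le> card E' + card EK"
          using card_mono[OF _ Ecov] card_Un_le[of E' EK] finE' by (meson finite_UnI le_trans)
        have cVK2: "card VK \<le> card K + 1"
          unfolding VK_def using card_Un_le[of K A] cA by simp
        define e where "e = card E"
        have d1: "(g - 2) * card E' + g + length cs \<le> g * card V'" using D' unfolding DLC_def .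
        have d2: "(g - 2) * card EK + g \<le> g * card VK" using GK unfolding GBC_def .
        have a1: "(g - 2) * card E \<le> (g - 2) * card E' + (g - 2) * card EK"
          using mult_le_mono2[OF cE, of "g - 2"] by (simp add: distrib_left)
        have a2: "g * card VK \<le> g * card K + g" using mult_le_mono2[OF cVK2, of g] by (simp add: distrib_left)
        have a3: "g * card V = g * card V' + g * card K" using cV by (simp add: distrib_left)
        have "(g - 2) * card E + g + length cs \<le> g * card V" using d1 d2 a1 a2 a3 by linarith
        then show ?thesis unfolding DLC_def .
      qed
    next
      case False
      then have Vcs: "V = set cs" using csV by blast
      have Ece: "E \<subseteq> cedges cs"
      proof
        fix e assume eE: "e \<in> E"
        then have "e \<subseteq> set cs" using graph_edge_sub[OF G eE] Vcs by blast
        then show "e \<in> cedges cs" using noch eE by blast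
      qed
      have cE: "card E \<le> length cs"
        using card_mono[OF _ Ece] cedges_card_le[of cs] m3 by (metis finite_subset ceE finE le_trans list.size(3) not_numeral_le_zero)
      have cV: "card V = length cs" using Vcs distinct_card[OF dcs] by simp
      have gm: "g \<le> length cs" using gi cy unfolding girth_def by blast
      have a1: "(g - 2) * card E \<le> (g - 2) * length cs" using mult_le_mono2[OF cE] .
      have a2: "(g - 2) * length cs + 2 * length cs = g * length cs"
      proof -
        have "(g - 2) * length cs + 2 * length cs = (g - 2 + 2) * length cs" by (simp only: add_mult_distrib)
        also have "g - 2 + 2 = g" using g3 by simp
        finally show ?thesis .
      qed
      have a3: "g * card V = g * length cs" using cV by simp
      have "(g - 2) * card E + g + length cs \<le> g * card V" using a1 a2 a3 gm by linarith
      then show ?thesis unfolding DLC_def .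
    qed
  qed
qed


lemma edge_other:
  assumes G: "graph V E" and e: "e \<in> E" and x: "x \<in> e"
  shows "\<exists>y. e = {x,y} \<and> y \<noteq> x \<and> y \<in> V"
proof -
  obtain a b where ab: "e = {a,b}" "a \<noteq> b" "a \<in> V" "b \<in> V" using graph_edge[OF G e] by blast
  show ?thesis
  proof (cases "x = a")
    case True then show ?thesis using ab by blast
  next
    case False then have "x = b" using x ab by blast
    then show ?thesis using ab by (auto simp: insert_commute)
  qed
qed

lemma two_in: "finite S \<Longrightarrow> 2 \<le> card S \<Longrightarrow> \<exists>a b. a \<in> S \<and> b \<in> S \<and> a \<noteq> b"
  using card_le_Suc0_iff_eq[of S] by auto

lemma gb_step:
  fixes V :: "'a set"
  assumes g3: "3 \<le> g"
    and IHG: "\<And>V' E' (p'::'a \<Rightarrow> complex) \<gamma>'. card V' + card E' < card V + card E \<Longrightarrow> GBH g V' E' p' \<gamma>' \<Longrightarrow> GBC g V' E'"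
    and DISK: "\<And>V' E' (p'::'a \<Rightarrow> complex) \<gamma>' cs'. card V' + card E' \<le> card V + card E \<Longrightarrow> DLH g V' E' p' \<gamma>' cs' \<Longrightarrow> DLC g V' E' cs'"
    and H: "GBH g V E p \<gamma>"
  shows "GBC g V E"
proof -
  have G: "graph V E" and D: "drawn V E p \<gamma>" and gi: "girth g E" and Vne: "V \<noteq> {}"
    using H unfolding GBH_def by blast+
  have finV: "finite V" by (rule graph_fin[OF G])
  have finE: "finite E" by (rule graph_finE[OF G])
  define dg where "dg x = card {e \<in> E. x \<in> e}" for x
  show ?thesis
  proof (cases "\<exists>x\<in>V. (g - 2) * dg x \<le> g")
    case True
    then obtain x where x: "x \<in> V" "(g - 2) * dg x \<le> g" by blast
    show ?thesis
    proof (cases "V = {x}")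
      case True
      have "E = {}"
      proof (rule ccontr)
        assume "E \<noteq> {}"
        then obtain e where "e \<in> E" by blast
        then obtain a b where "e = {a,b}" "a \<noteq> b" "a \<in> V" "b \<in> V" using graph_edge[OF G] by blast
        then show False using True by blast
      qed
      then show ?thesis unfolding GBC_def using True by simp
    next
      case False
      define V' where "V' = V - {x}"
      define E' where "E' = {e \<in> E. x \<notin> e}"
      have V'V: "V' \<subseteq> V" and E'E: "E' \<subseteq> E" unfolding V'_def E'_def by blast+
      have ev: "\<forall>e\<in>E'. e \<subseteq> V'" using graph_edge_sub[OF G] unfolding E'_def V'_def by blast
      have V'ne: "V' \<noteq> {}" using False x(1) unfolding V'_def by blast
      have H': "GBH g V' E' p \<gamma>"
        unfolding GBH_def using graph_sub[OF G V'V E'E ev] drawn_sub[OF D V'V E'E ev] girth_sub[OF gi E'E] V'ne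
        by blast
      have cV: "card V = Suc (card V')"
      proof -
        have "card V' = card V - 1" unfolding V'_def using x(1) by (simp add: card_Diff_singleton)
        moreover have "card V > 0" using finV x(1) card_gt_0_iff by blast
        ultimately show ?thesis by simp
      qed
      have cE: "card E = card E' + dg x"
      proof -
        have "E = E' \<union> {e \<in> E. x \<in> e}" unfolding E'_def by blast
        moreover have "E' \<inter> {e \<in> E. x \<in> e} = {}" unfolding E'_def by blast
        ultimately show ?thesis unfolding dg_def using finE
          by (metis (no_types, lifting) card_Un_disjoint finite_Un)
      qed
      have G': "GBC g V' E'" by (rule IHG[OF _ H']) (use cV cE in simp)
      have d1: "(g - 2) * card E' + g \<le> g * card V'" using G' unfolding GBC_def .
      have a1: "(g - 2) * card E = (g - 2) * card E' + (g - 2) * dg x" using cE by (simp add: distrib_left)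
      have a2: "g * card V = g * card V' + g" using cV by simp
      have "(g - 2) * card E + g \<le> g * card V" using d1 a1 a2 x(2) by linarith
      then show ?thesis unfolding GBC_def .
    qed
  next
    case False
    have deg2: "\<exists>y z. y \<noteq> z \<and> {x,y} \<in> E \<and> {x,z} \<in> E" if x: "x \<in> V" for x
    proof -
      have "\<not> (g - 2) * dg x \<le> g" using False x by blast
      then have "2 \<le> dg x"
      proof -
        assume n: "\<not> (g - 2) * dg x \<le> g"
        show "2 \<le> dg x"
        proof (rule ccontr)
          assume "\<not> 2 \<le> dg x"
          then have "dg x \<le> 1" by simp
          then have "(g - 2) * dg x \<le> (g - 2) * 1" by (rule mult_le_mono2)
          then have "(g - 2) * dg x \<le> g - 2" by (simp only: mult_1_right)
          then show False using n by linarith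
        qed
      qed
      then obtain e1 e2 where e: "e1 \<in> E" "x \<in> e1" "e2 \<in> E" "x \<in> e2" "e1 \<noteq> e2"
        using two_in[of "{e \<in> E. x \<in> e}"] finE unfolding dg_def by auto
      obtain y where y: "e1 = {x,y}" using edge_other[OF G e(1,2)] by blast
      obtain z where z: "e2 = {x,z}" using edge_other[OF G e(3,4)] by blast
      have "y \<noteq> z" using e(5) y z by blast
      then show ?thesis using e y z by blast
    qed
    obtain cs where cy: "cyc E cs" using long_cycle[OF G Vne deg2] by blast
    have dcs: "distinct cs" and m3: "3 \<le> length cs" and ceE: "cedges cs \<subseteq> E" using cy unfolding cyc_def by auto
    have csV: "set cs \<subseteq> V" by (rule cyc_set_sub[OF G cy])
    define J where "J = img \<gamma> (cedges cs)"
    have JJ: "inside J \<noteq> {} \<and> open (inside J) \<and> open (outside J) \<and> closed J \<and> bounded J \<and>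
         inside J \<inter> outside J = {} \<and> inside J \<union> outside J = - J"
      unfolding J_def by (rule jordan[OF G D cy])
    have Jv: "J \<inter> p ` V = p ` set cs"
      using img_vert[OF G D ceE] cedges_Union[OF m3] unfolding J_def by simp
    have injp: "inj_on p V" by (rule drawn_inj[OF D])
    have onJ: "x \<in> set cs" if "x \<in> V" "p x \<in> J" for x
    proof -
      have "p x \<in> p ` set cs" using Jv that by blast
      then show ?thesis using inj_onD[OF injp] that(1) csV by blast
    qed
    have pcs: "p ` set cs \<subseteq> J" using Jv by blast
    define Vi where "Vi = set cs \<union> {w \<in> V. p w \<in> inside J}"
    define Ei where "Ei = {e \<in> E. path_image (\<gamma> e) \<subseteq> J \<union> inside J}"
    have Hi: "DLH g Vi Ei p \<gamma> cs" using sub_instance[OF G D gi cy csV] unfolding Vi_def Ei_def J_def .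
    have ViV: "Vi \<subseteq> V" unfolding Vi_def using csV by blast
    have EiE: "Ei \<subseteq> E" unfolding Ei_def by blast
    have Di: "DLC g Vi Ei cs"
      by (rule DISK[OF _ Hi]) (use card_mono[OF finV ViV] card_mono[OF finE EiE] in simp)
    \<comment> \<open>outside part, via inversion\<close>
    obtain z0 where z0: "z0 \<in> inside J" using JJ by blast
    define f where "f = finv z0"
    define Vo where "Vo = set cs \<union> {w \<in> V. p w \<in> outside J}"
    define Eo where "Eo = {e \<in> E. path_image (\<gamma> e) \<subseteq> J \<union> outside J}"
    have VoV: "Vo \<subseteq> V" unfolding Vo_def using csV by blast
    have EoE: "Eo \<subseteq> E" unfolding Eo_def by blast
    have evo: "\<forall>e\<in>Eo. e \<subseteq> Vo"
    proof
      fix e assume e: "e \<in> Eo"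
      show "e \<subseteq> Vo"
      proof
        fix x assume x: "x \<in> e"
        have eE: "e \<in> E" using e EoE by blast
        have xV: "x \<in> V" using graph_edge_sub[OF G eE] x by blast
        have "p x \<in> J \<union> outside J" using ends_in_image[OF G D eE] x e unfolding Eo_def by blast
        then show "x \<in> Vo" using onJ[OF xV] xV unfolding Vo_def by blast
      qed
    qed
    have Go: "graph Vo Eo" by (rule graph_sub[OF G VoV EoE evo])
    have Do0: "drawn Vo Eo p \<gamma>" by (rule drawn_sub[OF D VoV EoE evo])
    have vo: "p w \<in> J \<union> outside J" if "w \<in> Vo" for w
      using that pcs unfolding Vo_def by blast
    have z0n: "z0 \<notin> J \<union> outside J" using z0 JJ inside_no_overlap[of J] by blast
    have Do: "drawn Vo Eo (f \<circ> p) (\<lambda>e. f \<circ> \<gamma> e)"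
      unfolding f_def
      by (rule drawn_finv[OF Do0 Go]) (use vo z0n in \<open>auto simp: Eo_def\<close>)
    have ceo: "cedges cs \<subseteq> Eo" using ceE unfolding Eo_def J_def img_def by blast
    have cyo: "cyc Eo cs" using cy ceo unfolding cyc_def by blast
    have J': "img (\<lambda>e. f \<circ> \<gamma> e) (cedges cs) = f ` J" unfolding f_def J_def by (rule img_finv)
    have inv: "f ` outside J \<subseteq> inside (f ` J)"
      unfolding f_def using inv_inside[of J z0] JJ z0 by blast
    have Ho: "DLH g Vo Eo (f \<circ> p) (\<lambda>e. f \<circ> \<gamma> e) cs"
    proof -
      have "\<forall>v\<in>Vo. (f \<circ> p) v \<in> f ` J \<union> inside (f ` J)" using vo inv by auto
      moreover have "\<forall>e\<in>Eo. path_image (f \<circ> \<gamma> e) \<subseteq> f ` J \<union> inside (f ` J)"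
      proof
        fix e assume "e \<in> Eo"
        then have "path_image (\<gamma> e) \<subseteq> J \<union> outside J" unfolding Eo_def by blast
        then show "path_image (f \<circ> \<gamma> e) \<subseteq> f ` J \<union> inside (f ` J)"
          unfolding path_image_compose using inv by blast
      qed
      ultimately show ?thesis unfolding DLH_def J' using Go Do girth_sub[OF gi EoE] cyo by blast
    qed
    have Do2: "DLC g Vo Eo cs"
      by (rule DISK[OF _ Ho]) (use card_mono[OF finV VoV] card_mono[OF finE EoE] in simp)
    have Vcov: "V \<subseteq> Vi \<union> Vo"
    proof
      fix w assume w: "w \<in> V"
      show "w \<in> Vi \<union> Vo"
      proof (cases "p w \<in> J")
        case True then show ?thesis using onJ[OF w] unfolding Vi_def by blast
      next
        case False
        then have "p w \<in> inside J \<or> p w \<in> outside J" using JJ by blast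
        then show ?thesis using w unfolding Vi_def Vo_def by blast
      qed
    qed
    have Vint: "Vi \<inter> Vo \<subseteq> set cs" using JJ unfolding Vi_def Vo_def by blast
    have Ecov: "E \<subseteq> Ei \<union> Eo"
    proof
      fix e assume eE: "e \<in> E"
      show "e \<in> Ei \<union> Eo"
      proof (cases "e \<in> cedges cs")
        case True
        then have "path_image (\<gamma> e) \<subseteq> J" unfolding J_def img_def by blast
        then show ?thesis using eE unfolding Ei_def by blast
      next
        case False
        have "eint \<gamma> p e \<inter> J = {}" unfolding J_def by (rule eint_img[OF G D eE ceE False])
        then have "eint \<gamma> p e \<subseteq> inside J \<union> outside J" using JJ by blast
        then have "eint \<gamma> p e \<subseteq> inside J \<or> eint \<gamma> p e \<subseteq> outside J"
          using edge_side[OF G D eE] JJ by blast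
        then show ?thesis
        proof
          assume "eint \<gamma> p e \<subseteq> inside J"
          then have "closure (eint \<gamma> p e) \<subseteq> J \<union> inside J"
            using closure_mono closure_inside_subset JJ by blast
          then show ?thesis using closure_eint[OF G D eE] eE unfolding Ei_def by blast
        next
          assume "eint \<gamma> p e \<subseteq> outside J"
          then have "closure (eint \<gamma> p e) \<subseteq> J \<union> outside J"
            using closure_mono closure_outside_subset JJ by blast
          then show ?thesis using closure_eint[OF G D eE] eE unfolding Eo_def by blast
        qed
      qed
    qed
    have ceio: "cedges cs \<subseteq> Ei \<inter> Eo"
      using ceE unfolding Ei_def Eo_def J_def img_def by blast
    have finVi: "finite Vi" "finite Vo" using finV ViV VoV finite_subset by blast+
    have finEi: "finite Ei" "finite Eo" using finE EiE EoE finite_subset by blast+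
    define m where "m = length cs"
    have nV: "card Vi + card Vo \<le> card V + m"
    proof -
      have "card Vi + card Vo = card (Vi \<union> Vo) + card (Vi \<inter> Vo)" by (rule card_Un_Int[OF finVi])
      moreover have "card (Vi \<union> Vo) \<le> card V" using card_mono[OF finV] ViV VoV by blast
      moreover have "card (Vi \<inter> Vo) \<le> card (set cs)" using card_mono[OF _ Vint] by simp
      moreover have "card (set cs) = m" using distinct_card[OF dcs] unfolding m_def .
      ultimately show ?thesis by linarith
    qed
    have nE: "card E + m \<le> card Ei + card Eo"
    proof -
      have "card Ei + card Eo = card (Ei \<union> Eo) + card (Ei \<inter> Eo)" by (rule card_Un_Int[OF finEi])
      moreover have "card E \<le> card (Ei \<union> Eo)" using card_mono[OF _ Ecov] finEi by blast
      moreover have "card (cedges cs) \<le> card (Ei \<inter> Eo)" using card_mono[OF _ ceio] finEi by blast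
      moreover have "card (cedges cs) = m" using cedges_card[OF dcs m3] unfolding m_def .
      ultimately show ?thesis by linarith
    qed
    have d1: "(g - 2) * card Ei + g + m \<le> g * card Vi" using Di unfolding DLC_def m_def .
    have d2: "(g - 2) * card Eo + g + m \<le> g * card Vo" using Do2 unfolding DLC_def m_def .
    have a1: "(g - 2) * card E + (g - 2) * m \<le> (g - 2) * card Ei + (g - 2) * card Eo"
      using mult_le_mono2[OF nE, of "g - 2"] by (simp add: distrib_left)
    have a2: "g * card Vi + g * card Vo \<le> g * card V + g * m"
      using mult_le_mono2[OF nV, of g] by (simp add: distrib_left)
    have a3: "(g - 2) * m + 2 * m = g * m"
    proof -
      have "(g - 2) * m + 2 * m = (g - 2 + 2) * m" by (simp only: add_mult_distrib)
      also have "g - 2 + 2 = g" using g3 by simp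
      finally show ?thesis .
    qed
    have "(g - 2) * card E + g \<le> g * card V" using d1 d2 a1 a2 a3 by linarith
    then show ?thesis unfolding GBC_def .
  qed
qed

lemma main_ind:
  assumes g3: "3 \<le> g"
  shows "(\<forall>(V::'a set) E (p::'a \<Rightarrow> complex) \<gamma> cs. card V + card E = N \<longrightarrow> DLH g V E p \<gamma> cs \<longrightarrow> DLC g V E cs) \<and>
         (\<forall>(V::'a set) E (p::'a \<Rightarrow> complex) \<gamma>. card V + card E = N \<longrightarrow> GBH g V E p \<gamma> \<longrightarrow> GBC g V E)"
proof (induction N rule: less_induct)
  case (less N)
  have IHD: "DLC g V E cs" if "card V + card E < N" "DLH g V E p \<gamma> cs"
    for V :: "'a set" and E p \<gamma> cs using less that by blast
  have IHG: "GBC g V E" if "card V + card E < N" "GBH g V E p \<gamma>"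
    for V :: "'a set" and E p \<gamma> using less that by blast
  have DN: "DLC g V E cs" if "card V + card E = N" "DLH g V E p \<gamma> cs"
    for V :: "'a set" and E p \<gamma> cs
  proof (rule disk_step[OF g3 _ _ that(2)])
    show "DLC g V' E' cs'" if "card V' + card E' < card V + card E" "DLH g V' E' p' \<gamma>' cs'"
      for V' E' and p' :: "'a \<Rightarrow> complex" and \<gamma>' cs'
      using IHD that \<open>card V + card E = N\<close> by simp
    show "GBC g V' E'" if "card V' + card E' < card V + card E" "GBH g V' E' p' \<gamma>'"
      for V' E' and p' :: "'a \<Rightarrow> complex" and \<gamma>'
      using IHG that \<open>card V + card E = N\<close> by simp
  qed
  have GN: "GBC g V E" if "card V + card E = N" "GBH g V E p \<gamma>"
    for V :: "'a set" and E p \<gamma>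
  proof (rule gb_step[OF g3 _ _ that(2)])
    show "GBC g V' E'" if "card V' + card E' < card V + card E" "GBH g V' E' p' \<gamma>'"
      for V' E' and p' :: "'a \<Rightarrow> complex" and \<gamma>'
      using IHG that \<open>card V + card E = N\<close> by simp
    show "DLC g V' E' cs'" if "card V' + card E' \<le> card V + card E" "DLH g V' E' p' \<gamma>' cs'"
      for V' E' and p' :: "'a \<Rightarrow> complex" and \<gamma>' cs'
    proof (cases "card V' + card E' < N")
      case True then show ?thesis using IHD that by simp
    next
      case False then show ?thesis using DN that \<open>card V + card E = N\<close> by simp
    qed
  qed
  show ?case using DN GN by blast
qed

lemma gb_bound:
  fixes V :: "'a set" and p :: "'a \<Rightarrow> complex"
  assumes "3 \<le> g" "GBH g V E p \<gamma>"
  shows "GBC g V E"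
  using main_ind[OF assms(1), of "card V + card E"] assms(2) by blast


lemma deg_eq:
  assumes G: "graph V E" and S: "S \<subseteq> V" and v: "v \<in> S"
  shows "delta E S v = card {e \<in> {e \<in> E. e \<subseteq> S}. v \<in> e}"
proof -
  have "bij_betw (\<lambda>u. {u,v}) {u \<in> S. adj E u v} {e \<in> {e \<in> E. e \<subseteq> S}. v \<in> e}"
  proof (rule bij_betwI')
    fix x y assume x: "x \<in> {u \<in> S. adj E u v}" and y: "y \<in> {u \<in> S. adj E u v}"
    have "{x,v} \<in> E" using x unfolding adj_def by blast
    then obtain a b where "{x,v} = {a,b}" "a \<noteq> b" using graph_edge[OF G] by blast
    then have xv: "x \<noteq> v" by (auto simp: doubleton_eq_iff)
    show "({x, v} = {y, v}) = (x = y)"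
    proof
      assume "{x, v} = {y, v}"
      then show "x = y" using xv by (auto simp: doubleton_eq_iff)
    qed simp
  next
    fix x assume x: "x \<in> {u \<in> S. adj E u v}"
    then show "{x, v} \<in> {e \<in> {e \<in> E. e \<subseteq> S}. v \<in> e}" using v unfolding adj_def by auto
  next
    fix e assume e: "e \<in> {e \<in> {e \<in> E. e \<subseteq> S}. v \<in> e}"
    then have eE: "e \<in> E" and eS: "e \<subseteq> S" and ve: "v \<in> e" by auto
    obtain y where y: "e = {v,y}" "y \<noteq> v" using edge_other[OF G eE ve] by blast
    have "y \<in> S" using eS y by blast
    moreover have "adj E y v" using eE y unfolding adj_def by (simp add: insert_commute)
    moreover have "e = {y, v}" using y by (simp add: insert_commute)
    ultimately show "\<exists>x\<in>{u \<in> S. adj E u v}. e = {x, v}" by blast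
  qed
  then show ?thesis unfolding delta_def by (rule bij_betw_same_card)
qed

lemma handshake:
  assumes G: "graph V E" and S: "S \<subseteq> V"
  shows "(\<Sum>v\<in>S. delta E S v) = 2 * card {e \<in> E. e \<subseteq> S}"
proof -
  define ES where "ES = {e \<in> E. e \<subseteq> S}"
  have finS: "finite S" using graph_fin[OF G] S finite_subset by blast
  have finES: "finite ES" using graph_finE[OF G] unfolding ES_def by simp
  have "(\<Sum>v\<in>S. delta E S v) = (\<Sum>v\<in>S. card {e \<in> ES. v \<in> e})"
    using deg_eq[OF G S] unfolding ES_def by simp
  also have "\<dots> = (\<Sum>v\<in>S. \<Sum>e\<in>ES. if v \<in> e then 1 else 0)"
  proof (rule sum.cong[OF refl])
    fix v assume "v \<in> S"
    have "card {e \<in> ES. v \<in> e} = (\<Sum>e\<in>{e \<in> ES. v \<in> e}. 1)" by simp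
    also have "\<dots> = (\<Sum>e\<in>ES. if v \<in> e then 1 else 0)" by (rule sum.inter_filter[OF finES])
    finally show "card {e \<in> ES. v \<in> e} = (\<Sum>e\<in>ES. if v \<in> e then 1 else 0)" .
  qed
  also have "\<dots> = (\<Sum>e\<in>ES. \<Sum>v\<in>S. if v \<in> e then 1 else 0)" by (rule sum.swap)
  also have "\<dots> = (\<Sum>e\<in>ES. (2::nat))"
  proof (rule sum.cong[OF refl])
    fix e assume e: "e \<in> ES"
    then have eE: "e \<in> E" and eS: "e \<subseteq> S" unfolding ES_def by auto
    obtain a b where ab: "e = {a,b}" "a \<noteq> b" using graph_edge[OF G eE] by blast
    have "(\<Sum>v\<in>S. if v \<in> e then 1 else 0) = (\<Sum>v\<in>{v \<in> S. v \<in> e}. (1::nat))"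
      by (rule sum.inter_filter[OF finS, symmetric])
    also have "{v \<in> S. v \<in> e} = e" using eS by blast
    finally show "(\<Sum>v\<in>S. if v \<in> e then 1 else 0) = (2::nat)" using ab by simp
  qed
  also have "\<dots> = 2 * card ES" by simp
  finally show ?thesis unfolding ES_def .
qed

lemma phi_full:
  assumes G: "graph V E" and d: "daf_set V E k V"
  shows "phi_d V E k = card V"
proof -
  define T where "T = {card X | X. daf_set V E k X}"
  have finV: "finite V" by (rule graph_fin[OF G])
  have le: "t \<le> card V" if t: "t \<in> T" for t
  proof -
    obtain X where "t = card X" "daf_set V E k X" using t unfolding T_def by blast
    then show ?thesis using card_mono[OF finV] unfolding daf_set_def by blast
  qed
  have finT: "finite T" using le by (meson finite_nat_set_iff_bounded_le)
  have inT: "card V \<in> T" using d unfolding T_def by blast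
  have "Max T = card V" by (rule Max_eqI[OF finT le inT])
  then show ?thesis unfolding phi_d_def T_def .
qed

lemma daf_from:
  assumes "\<And>S. S \<subseteq> V \<Longrightarrow> S \<noteq> {} \<Longrightarrow> \<exists>v\<in>S. int (delta E S v) < k"
  shows "daf_set V E k V"
  unfolding daf_set_def
proof (intro conjI notI)
  show "V \<subseteq> V" by simp
next
  assume "\<exists>S\<subseteq>V. defensive_alliance V E k S"
  then obtain S where S: "S \<subseteq> V" "defensive_alliance V E k S" by blast
  then have ne: "S \<noteq> {}" and al: "\<forall>v\<in>S. int (delta E (V - S) v) + k \<le> int (delta E S v)"
    unfolding defensive_alliance_def by auto
  obtain v where v: "v \<in> S" "int (delta E S v) < k" using assms[OF S(1) ne] by blast
  have "int (delta E (V - S) v) + k \<le> int (delta E S v)" using al v(1) by blast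
  then show False using v(2) by simp
qed

lemma planar_sparse:
  fixes V :: "'a set"
  assumes G: "graph V E" and P: "planar V E" and g3: "3 \<le> g" and gi: "girth g E"
    and gd: "2 * g \<le> (g - 2) * d" and S: "S \<subseteq> V" and Sne: "S \<noteq> {}"
  shows "\<exists>v\<in>S. delta E S v < d"
proof (rule ccontr)
  assume "\<not> (\<exists>v\<in>S. delta E S v < d)"
  then have dd: "\<forall>v\<in>S. d \<le> delta E S v" by auto
  obtain p :: "'a \<Rightarrow> complex" and \<gamma> where D: "drawn V E p \<gamma>" using P planar_drawn by blast
  define ES where "ES = {e \<in> E. e \<subseteq> S}"
  have ESE: "ES \<subseteq> E" and es: "\<forall>e\<in>ES. e \<subseteq> S" unfolding ES_def by auto
  have H: "GBH g S ES p \<gamma>"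
    unfolding GBH_def using graph_sub[OF G S ESE es] drawn_sub[OF D S ESE es] girth_sub[OF gi ESE] Sne by blast
  have gb: "(g - 2) * card ES + g \<le> g * card S" using gb_bound[OF g3 H] unfolding GBC_def .
  have "card S * d \<le> (\<Sum>v\<in>S. delta E S v)" using sum_bounded_below[of S d "delta E S"] dd by simp
  then have h1: "d * card S \<le> 2 * card ES" using handshake[OF G S] unfolding ES_def by (simp add: mult.commute)
  have h2: "(g - 2) * (d * card S) \<le> (g - 2) * (2 * card ES)" using mult_le_mono2[OF h1] .
  have h3: "2 * g * card S \<le> (g - 2) * d * card S" using mult_le_mono1[OF gd] .
  have e1: "(g - 2) * (d * card S) = (g - 2) * d * card S" by (simp add: mult.assoc)
  have e2: "(g - 2) * (2 * card ES) = 2 * ((g - 2) * card ES)" by (simp add: mult.left_commute)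
  have e3: "2 * g * card S = 2 * (g * card S)" by (simp add: mult.assoc)
  show False using gb h2 h3 e1 e2 e3 g3 by linarith
qed

lemma girth3: "girth 3 E"
  unfolding girth_def cyc_def by blast

lemma girth4:
  assumes G: "graph V E" and T: "triangle_free V E"
  shows "girth 4 E"
  unfolding girth_def
proof (intro allI impI)
  fix cs assume c: "cyc E cs"
  have l3: "3 \<le> length cs" using c unfolding cyc_def by blast
  show "4 \<le> length cs"
  proof (rule ccontr)
    assume "\<not> 4 \<le> length cs"
    then have "length cs = 3" using l3 by simp
    then obtain a b x where cs: "cs = [a, b, x]"
      by (cases cs; cases "tl cs"; cases "tl (tl cs)") auto
    have ce: "cedges cs \<subseteq> E" using c unfolding cyc_def by blast
    have e: "{a,b} \<in> E" "{b,x} \<in> E" "{x,a} \<in> E" using ce unfolding cs cedges_def by auto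
    have V: "set cs \<subseteq> V" by (rule cyc_set_sub[OF G c])
    have "adj E a b" "adj E b x" "adj E a x" using e unfolding adj_def by (auto simp: insert_commute)
    then show False using T V unfolding triangle_free_def cs by auto
  qed
qed

lemma tree_sparse:
  assumes G: "graph V E" and nc: "\<not> has_cycle V E" and S: "S \<subseteq> V" and Sne: "S \<noteq> {}"
  shows "\<exists>v\<in>S. delta E S v < 2"
proof (rule ccontr)
  assume "\<not> (\<exists>v\<in>S. delta E S v < 2)"
  then have dd: "\<forall>v\<in>S. 2 \<le> delta E S v" by auto
  define ES where "ES = {e \<in> E. e \<subseteq> S}"
  have ESE: "ES \<subseteq> E" and es: "\<forall>e\<in>ES. e \<subseteq> S" unfolding ES_def by auto
  have GS: "graph S ES" by (rule graph_sub[OF G S ESE es])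
  have finS: "finite S" by (rule graph_fin[OF GS])
  have deg2: "\<exists>y z. y \<noteq> z \<and> {x,y} \<in> ES \<and> {x,z} \<in> ES" if x: "x \<in> S" for x
  proof -
    have "2 \<le> card {u \<in> S. adj E u x}" using dd x unfolding delta_def by blast
    then obtain y z where yz: "y \<in> {u \<in> S. adj E u x}" "z \<in> {u \<in> S. adj E u x}" "y \<noteq> z"
      using two_in[of "{u \<in> S. adj E u x}"] finS by auto
    have "{y,x} \<in> E" "{z,x} \<in> E" "y \<in> S" "z \<in> S" using yz unfolding adj_def by auto
    moreover have "{x,y} = {y,x}" "{x,z} = {z,x}" by (rule insert_commute)+
    ultimately have "{x,y} \<in> ES" "{x,z} \<in> ES" using x unfolding ES_def by auto
    then show ?thesis using yz(3) by blast
  qed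
  obtain cs where c: "cyc ES cs" using long_cycle[OF GS Sne deg2] by blast
  have d: "distinct cs" and l3: "3 \<le> length cs" and ce: "cedges cs \<subseteq> ES" using c unfolding cyc_def by auto
  have csS: "set cs \<subseteq> S" by (rule cyc_set_sub[OF GS c])
  have "walk V E cs"
    unfolding walk_def
  proof (intro conjI allI impI)
    show "cs \<noteq> []" using l3 by auto
    show "set cs \<subseteq> V" using csS S by blast
    fix i assume "Suc i < length cs"
    then have "{cs ! i, cs ! Suc i} \<in> pe cs" by (rule pe_nth)
    then show "adj E (cs ! i) (cs ! Suc i)" using ce ESE unfolding adj_def cedges_def by blast
  qed
  moreover have "adj E (last cs) (hd cs)" using ce ESE unfolding adj_def cedges_def by blast
  ultimately have "has_cycle V E" unfolding has_cycle_def using d l3 by blast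
  then show False using nc by blast
qed

theorem proposition1:
  fixes V :: "'a set" and E :: "'a set set" and k :: int
  assumes "graph V E"
  shows "(is_tree V E \<and> max_degree V E \<ge> 2 \<and> 2 \<le> k \<and> k \<le> int (max_degree V E)
            \<longrightarrow> phi_d V E k = card V)
       \<and> (planar V E \<and> max_degree V E \<ge> 6 \<and> 6 \<le> k \<and> k \<le> int (max_degree V E)
            \<longrightarrow> phi_d V E k = card V)
       \<and> (planar V E \<and> triangle_free V E \<and> max_degree V E \<ge> 4 \<and> 4 \<le> k \<and> k \<le> int (max_degree V E)
            \<longrightarrow> phi_d V E k = card V)"
proof (intro conjI impI)
  assume a: "is_tree V E \<and> max_degree V E \<ge> 2 \<and> 2 \<le> k \<and> k \<le> int (max_degree V E)"
  have nc: "\<not> has_cycle V E" using a unfolding is_tree_def by blast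
  have "daf_set V E k V"
  proof (rule daf_from)
    fix S assume "S \<subseteq> V" "S \<noteq> {}"
    then obtain v where "v \<in> S" "delta E S v < 2" using tree_sparse[OF assms nc] by blast
    then show "\<exists>v\<in>S. int (delta E S v) < k" using a by force
  qed
  then show "phi_d V E k = card V" by (rule phi_full[OF assms])
next
  assume a: "planar V E \<and> max_degree V E \<ge> 6 \<and> 6 \<le> k \<and> k \<le> int (max_degree V E)"
  have "daf_set V E k V"
  proof (rule daf_from)
    fix S assume S: "S \<subseteq> V" "S \<noteq> {}"
    have "\<exists>v\<in>S. delta E S v < 6"
      by (rule planar_sparse[OF assms _ _ girth3 _ S]) (use a in auto)
    then show "\<exists>v\<in>S. int (delta E S v) < k" using a by force
  qed
  then show "phi_d V E k = card V" by (rule phi_full[OF assms])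
next
  assume a: "planar V E \<and> triangle_free V E \<and> max_degree V E \<ge> 4 \<and> 4 \<le> k \<and> k \<le> int (max_degree V E)"
  have g4: "girth 4 E" using girth4[OF assms] a by blast
  have "daf_set V E k V"
  proof (rule daf_from)
    fix S assume S: "S \<subseteq> V" "S \<noteq> {}"
    have "\<exists>v\<in>S. delta E S v < 4"
      by (rule planar_sparse[OF assms _ _ g4 _ S]) (use a in auto)
    then show "\<exists>v\<in>S. int (delta E S v) < k" using a by force
  qed
  then show "phi_d V E k = card V" by (rule phi_full[OF assms])
qed

end
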